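(* Let $t\le T$, $\omega_1(0)\in L_2(\Omega)$, $u_1\in L_4(\Omega^t)$, $F_1\in L_2(0,t;L_{6/5}(\Omega))$, and let $\omega_1$ solve \[\omega_{1,t}+\bm v\cdot\nabla\omega_1-\nu\Big(\Delta\omega_1+\frac2r\omega_{1,r}\Big)=2u_1u_{1,z}+F_1\ \text{in }\Omega^t,\qquad\omega_1=0\ \text{on }S^t,\qquad\omega_1|_{t=0}=\omega_1(0).\] Then \[\frac12\int_\Omega\omega_1^2\,dx+\frac\nu2\int_{\Omega^t}|\nabla\omega_1|^2dx\,dt'+\nu\int_0^t\int_{-a}^a\omega_1^2\big|_{r=0}dz\,dt'\le\frac1\nu\int_{\Omega^t}u_1^4dx\,dt'+c\|F_1\|_{L_2(0,t;L_{6/5}(\Omega))}^2+\int_\Omega\omega_1^2(0)\,dx,\] where the first term on the left is evaluated at time $t$.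
   Context: $\Omega=\{x\in\mathbb R^3: r<R,|z|<a\}$ in cylindrical coordinates, $S=\partial\Omega$, $\Omega^t=\Omega\times(0,t)$, $S^t=S\times(0,t)$, $\nu>0$. $\bm v=v_r\bar e_r+v_\varphi\bar e_\varphi+v_z\bar e_z$ is an axially symmetric solution of the Navier–Stokes equations $\bm v_t+(\bm v\cdot\nabla)\bm v-\nu\Delta\bm v+\nabla p=\bm f$, $\operatorname{div}\bm v=0$ in $\Omega$ with $\bm v\cdot\bar n=0$, $v_\varphi=0$, $\omega_\varphi=v_{r,z}-v_{z,r}=0$ on $S$. $u_1=v_\varphi/r$, $\omega_1=\omega_\varphi/r$, $F_1=F_\varphi/r$ with $F_\varphi=(\operatorname{rot}\bm f)\cdot\bar e_\varphi$. $\nabla=\bar e_r\partial_r+\bar e_z\partial_z$, $\Delta=\partial_r^2+\frac1r\partial_r+\partial_z^2$. $c$ is a generic positive constant. Solutions are assumed regular enough for the computations. *)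

theory Defs
  imports "HOL-Analysis.Analysis"
begin

text \<open>Axially symmetric scalar fields are represented in cylindrical coordinates as
  functions of (r, z, time).  Integral over the cylinder Omega = {r < R, |z| < a} in R^3:
  dx = r dr dphi dz, integrated over phi gives the factor 2 pi.\<close>

definition cyl_int :: "real \<Rightarrow> real \<Rightarrow> (real \<Rightarrow> real \<Rightarrow> real) \<Rightarrow> real" where
  "cyl_int R a g = 2 * pi * integral ({0..R} \<times> {-a..a}) (\<lambda>(r, z). g r z * r)"

definition stbox :: "real \<Rightarrow> real \<Rightarrow> real \<Rightarrow> (real \<times> real \<times> real) set" where
  "stbox R a t = {0..R} \<times> {-a..a} \<times> {0..t}"

text \<open>Hypotheses of the lemma (classical regular solutions):
  vr, vz : components v_r, v_z of the velocity, with derivatives vr_r = v_{r,r}, vz_z = v_{z,z};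
  w = omega_1 with partial derivatives w_r, w_z, w_rr, w_zz, w_t;
  u = u_1 with u_z = u_{1,z};  F = F_1.\<close>

definition omega1_problem ::
  "real \<Rightarrow> real \<Rightarrow> real \<Rightarrow> real \<Rightarrow>
   (real \<Rightarrow> real \<Rightarrow> real \<Rightarrow> real) \<Rightarrow> (real \<Rightarrow> real \<Rightarrow> real \<Rightarrow> real) \<Rightarrow>
   (real \<Rightarrow> real \<Rightarrow> real \<Rightarrow> real) \<Rightarrow> (real \<Rightarrow> real \<Rightarrow> real \<Rightarrow> real) \<Rightarrow>
   (real \<Rightarrow> real \<Rightarrow> real \<Rightarrow> real) \<Rightarrow> (real \<Rightarrow> real \<Rightarrow> real \<Rightarrow> real) \<Rightarrow>
   (real \<Rightarrow> real \<Rightarrow> real \<Rightarrow> real) \<Rightarrow> (real \<Rightarrow> real \<Rightarrow> real \<Rightarrow> real) \<Rightarrow>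
   (real \<Rightarrow> real \<Rightarrow> real \<Rightarrow> real) \<Rightarrow> (real \<Rightarrow> real \<Rightarrow> real \<Rightarrow> real) \<Rightarrow>
   (real \<Rightarrow> real \<Rightarrow> real \<Rightarrow> real) \<Rightarrow> (real \<Rightarrow> real \<Rightarrow> real \<Rightarrow> real) \<Rightarrow>
   (real \<Rightarrow> real \<Rightarrow> real \<Rightarrow> real) \<Rightarrow> bool" where
  "omega1_problem R a nu t vr vr_r vz vz_z w w_r w_z w_rr w_zz w_t u u_z F \<longleftrightarrow>
     \<comment> \<open>regularity: partial derivatives on the closed space-time box\<close>
     (\<forall>r z \<tau>. 0 \<le> r \<and> r \<le> R \<and> -a \<le> z \<and> z \<le> a \<and> 0 \<le> \<tau> \<and> \<tau> \<le> t \<longrightarrow>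
        ((\<lambda>s. vr s z \<tau>) has_real_derivative vr_r r z \<tau>) (at r within {0..R}) \<and>
        ((\<lambda>s. vz r s \<tau>) has_real_derivative vz_z r z \<tau>) (at z within {-a..a}) \<and>
        ((\<lambda>s. w s z \<tau>) has_real_derivative w_r r z \<tau>) (at r within {0..R}) \<and>
        ((\<lambda>s. w r s \<tau>) has_real_derivative w_z r z \<tau>) (at z within {-a..a}) \<and>
        ((\<lambda>s. w_r s z \<tau>) has_real_derivative w_rr r z \<tau>) (at r within {0..R}) \<and>
        ((\<lambda>s. w_z r s \<tau>) has_real_derivative w_zz r z \<tau>) (at z within {-a..a}) \<and>
        ((\<lambda>s. w r z s) has_real_derivative w_t r z \<tau>) (at \<tau> within {0..t}) \<and>
        ((\<lambda>s. u r s \<tau>) has_real_derivative u_z r z \<tau>) (at z within {-a..a})) \<and>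
     continuous_on (stbox R a t) (\<lambda>(r, z, \<tau>). vr r z \<tau>) \<and>
     continuous_on (stbox R a t) (\<lambda>(r, z, \<tau>). vr_r r z \<tau>) \<and>
     continuous_on (stbox R a t) (\<lambda>(r, z, \<tau>). vz r z \<tau>) \<and>
     continuous_on (stbox R a t) (\<lambda>(r, z, \<tau>). vz_z r z \<tau>) \<and>
     continuous_on (stbox R a t) (\<lambda>(r, z, \<tau>). w r z \<tau>) \<and>
     continuous_on (stbox R a t) (\<lambda>(r, z, \<tau>). w_r r z \<tau>) \<and>
     continuous_on (stbox R a t) (\<lambda>(r, z, \<tau>). w_z r z \<tau>) \<and>
     continuous_on (stbox R a t) (\<lambda>(r, z, \<tau>). w_rr r z \<tau>) \<and>
     continuous_on (stbox R a t) (\<lambda>(r, z, \<tau>). w_zz r z \<tau>) \<and>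
     continuous_on (stbox R a t) (\<lambda>(r, z, \<tau>). w_t r z \<tau>) \<and>
     continuous_on (stbox R a t) (\<lambda>(r, z, \<tau>). u r z \<tau>) \<and>
     continuous_on (stbox R a t) (\<lambda>(r, z, \<tau>). u_z r z \<tau>) \<and>
     continuous_on (stbox R a t) (\<lambda>(r, z, \<tau>). F r z \<tau>) \<and>
     \<comment> \<open>div v = 0 in Omega (axially symmetric form: v_{r,r} + v_r/r + v_{z,z} = 0)\<close>
     (\<forall>r z \<tau>. 0 < r \<and> r < R \<and> -a < z \<and> z < a \<and> 0 < \<tau> \<and> \<tau> < t \<longrightarrow>
        vr_r r z \<tau> + vr r z \<tau> / r + vz_z r z \<tau> = 0) \<and>
     \<comment> \<open>v . n = 0 on S\<close>
     (\<forall>z \<tau>. -a \<le> z \<and> z \<le> a \<and> 0 \<le> \<tau> \<and> \<tau> \<le> t \<longrightarrow> vr R z \<tau> = 0) \<and>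
     (\<forall>r \<tau>. 0 \<le> r \<and> r \<le> R \<and> 0 \<le> \<tau> \<and> \<tau> \<le> t \<longrightarrow> vz r a \<tau> = 0 \<and> vz r (-a) \<tau> = 0) \<and>
     \<comment> \<open>the equation for omega_1 in Omega^t\<close>
     (\<forall>r z \<tau>. 0 < r \<and> r < R \<and> -a < z \<and> z < a \<and> 0 < \<tau> \<and> \<tau> < t \<longrightarrow>
        w_t r z \<tau> + (vr r z \<tau> * w_r r z \<tau> + vz r z \<tau> * w_z r z \<tau>)
          - nu * (w_rr r z \<tau> + w_r r z \<tau> / r + w_zz r z \<tau> + 2 / r * w_r r z \<tau>)
        = 2 * u r z \<tau> * u_z r z \<tau> + F r z \<tau>) \<and>
     \<comment> \<open>omega_1 = 0 on S^t\<close>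
     (\<forall>z \<tau>. -a \<le> z \<and> z \<le> a \<and> 0 \<le> \<tau> \<and> \<tau> \<le> t \<longrightarrow> w R z \<tau> = 0) \<and>
     (\<forall>r \<tau>. 0 \<le> r \<and> r \<le> R \<and> 0 \<le> \<tau> \<and> \<tau> \<le> t \<longrightarrow> w r a \<tau> = 0 \<and> w r (-a) \<tau> = 0)"

end

theory Submission
  imports Defs
begin


definition Irect :: "real \<Rightarrow> real \<Rightarrow> (real \<Rightarrow> real \<Rightarrow> real) \<Rightarrow> real" where
  "Irect R a h = integral ({0..R} \<times> {-a..a}) (\<lambda>p. h (fst p) (snd p))"

abbreviation C2 :: "real \<Rightarrow> real \<Rightarrow> (real \<Rightarrow> real \<Rightarrow> real) \<Rightarrow> bool" where
  "C2 R a h \<equiv> continuous_on ({0..R} \<times> {-a..a}) (\<lambda>p. h (fst p) (snd p))"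

lemma cyl_int_Irect: "cyl_int R a g = 2*pi*Irect R a (\<lambda>r z. g r z * r)"
  unfolding cyl_int_def Irect_def by (simp add: split_beta')

lemma C2_slice_r:
  assumes "C2 R a h" "z \<in> {-a..a}"
  shows "continuous_on {0..R} (\<lambda>r. h r z)"
proof -
  have "continuous_on {0..R} ((\<lambda>p. h (fst p) (snd p)) \<circ> (\<lambda>r. (r, z)))"
    by (rule continuous_on_compose) (use assms(2) in \<open>auto intro!: continuous_intros continuous_on_subset[OF assms(1)]\<close>)
  then show ?thesis by (simp add: o_def)
qed

lemma C2_slice_z:
  assumes "C2 R a h" "r \<in> {0..R}"
  shows "continuous_on {-a..a} (\<lambda>z. h r z)"
proof -
  have "continuous_on {-a..a} ((\<lambda>p. h (fst p) (snd p)) \<circ> (\<lambda>z. (r, z)))"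
    by (rule continuous_on_compose) (use assms(2) in \<open>auto intro!: continuous_intros continuous_on_subset[OF assms(1)]\<close>)
  then show ?thesis by (simp add: o_def)
qed

lemma rect_cbox: "{0..R} \<times> {-a..a} = cbox (0::real, -a) (R, a::real)"
  by (simp add: cbox_Pair_eq)

lemma C2_integrable:
  assumes "C2 R a h"
  shows "(\<lambda>p. h (fst p) (snd p)) integrable_on ({0..R} \<times> {-a..a})"
  using assms unfolding rect_cbox by (rule integrable_continuous)

lemma C2_fubini_rz:
  assumes "C2 R a h"
  shows "Irect R a h = integral {0..R} (\<lambda>r. integral {-a..a} (\<lambda>z. h r z))"
  using integral_prod_continuous[of 0 "-a" R a "\<lambda>p. h (fst p) (snd p)"] assms
  unfolding Irect_def rect_cbox by simp

lemma C2_fubini_zr: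
  assumes "C2 R a h"
  shows "Irect R a h = integral {-a..a} (\<lambda>z. integral {0..R} (\<lambda>r. h r z))"
proof -
  have c: "continuous_on (cbox (0, -a) (R, a)) (\<lambda>(x, y). h x y)"
    using assms unfolding rect_cbox by (simp add: split_beta')
  show ?thesis
    using C2_fubini_rz[OF assms] integral_swap_continuous[OF c] by simp
qed

lemma C2_param_z:
  assumes "C2 R a h"
  shows "continuous_on {0..R} (\<lambda>r. integral {-a..a} (\<lambda>z. h r z))"
proof -
  have "continuous_on ({0..R} \<times> cbox (-a) a) (\<lambda>(r, z). h r z)"
    using assms by (simp add: split_beta')
  from integral_continuous_on_param[OF this] show ?thesis by simp
qed

lemma C2_param_r:
  assumes "C2 R a h"
  shows "continuous_on {-a..a} (\<lambda>z. integral {0..R} (\<lambda>r. h r z))"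
proof -
  have "continuous_on ({-a..a} \<times> {0..R}) ((\<lambda>p. h (fst p) (snd p)) \<circ> prod.swap)"
    by (rule continuous_on_compose) (auto intro!: continuous_intros continuous_on_subset[OF assms])
  then have "continuous_on ({-a..a} \<times> cbox 0 R) (\<lambda>(z, r). h r z)"
    by (simp add: split_beta' o_def)
  from integral_continuous_on_param[OF this] show ?thesis by simp
qed

lemma Irect_add: "C2 R a f \<Longrightarrow> C2 R a g \<Longrightarrow> Irect R a (\<lambda>r z. f r z + g r z) = Irect R a f + Irect R a g"
  unfolding Irect_def by (intro integral_add C2_integrable)
lemma Irect_diff: "C2 R a f \<Longrightarrow> C2 R a g \<Longrightarrow> Irect R a (\<lambda>r z. f r z - g r z) = Irect R a f - Irect R a g"
  unfolding Irect_def by (intro integral_diff C2_integrable)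
lemma Irect_cmult: "Irect R a (\<lambda>r z. c * f r z) = c * Irect R a f"
  unfolding Irect_def by simp
lemma Irect_mono: "C2 R a f \<Longrightarrow> C2 R a g \<Longrightarrow> (\<And>r z. r \<in> {0..R} \<Longrightarrow> z \<in> {-a..a} \<Longrightarrow> f r z \<le> g r z) \<Longrightarrow> Irect R a f \<le> Irect R a g"
  unfolding Irect_def by (rule integral_le) (auto intro: C2_integrable)
lemma Irect_nonneg: "C2 R a f \<Longrightarrow> (\<And>r z. r \<in> {0..R} \<Longrightarrow> z \<in> {-a..a} \<Longrightarrow> 0 \<le> f r z) \<Longrightarrow> 0 \<le> Irect R a f"
  unfolding Irect_def by (rule integral_nonneg) (auto intro: C2_integrable)
lemma Irect_cong: "(\<And>r z. r \<in> {0..R} \<Longrightarrow> z \<in> {-a..a} \<Longrightarrow> f r z = g r z) \<Longrightarrow> Irect R a f = Irect R a g"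
  unfolding Irect_def by (rule integral_cong) auto

lemma ftc_real:
  fixes f f' :: "real \<Rightarrow> real"
  assumes "a \<le> b" "\<And>x. x \<in> {a..b} \<Longrightarrow> (f has_real_derivative f' x) (at x within {a..b})"
  shows "integral {a..b} f' = f b - f a" "f' integrable_on {a..b}"
proof -
  have "(f' has_integral (f b - f a)) {a..b}"
    by (rule fundamental_theorem_of_calculus) (use assms in \<open>auto simp: has_real_derivative_iff_has_vector_derivative\<close>)
  then show "integral {a..b} f' = f b - f a" "f' integrable_on {a..b}" by blast+
qed



lemma amgm_opt:
  fixes p q x :: real
  assumes "0 \<le> p" "0 \<le> q" "\<And>l. l > 0 \<Longrightarrow> x \<le> l*p + q/l"
  shows "x \<le> 2* sqrt(p*q)"
proof (cases "p > 0 \<and> q > 0")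
  case True
  define s where "s = sqrt p"
  define u where "u = sqrt q"
  have s: "s > 0" "s^2 = p" using True by (auto simp: s_def)
  have u: "u > 0" "u^2 = q" using True by (auto simp: u_def)
  have "x \<le> (u/s)*p + q/(u/s)" using assms(3)[of "u/s"] s u by auto
  also have "\<dots> = 2*(s*u)" using s u by (simp add: field_simps power2_eq_square)
  also have "s*u = sqrt(p*q)" by (simp add: s_def u_def real_sqrt_mult)
  finally show ?thesis .
next
  case False
  show ?thesis
  proof (rule ccontr)
    assume "\<not> ?thesis"
    then have x: "x > 0" using assms(1,2) by (smt (verit) real_sqrt_ge_zero mult_nonneg_nonneg)
    show False
    proof (cases "p = 0")
      case True
      have "x \<le> 0*p + q/(2*(q+1)/x)" using assms(3)[of "2*(q+1)/x"] x assms(2) True by simp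
      also have "\<dots> = q*x/(2*(q+1))" by simp
      also have "\<dots> < x" using x assms(2) mult_nonneg_nonneg[of q x] by (simp add: field_simps) (smt (verit) mult_nonneg_nonneg)
      finally show False by simp
    next
      case False
      then have q0: "q = 0" "p > 0" using \<open>\<not>(p > 0 \<and> q > 0)\<close> assms by auto
      have "x \<le> (x/(2*(p+1)))*p + q/(x/(2*(p+1)))" using assms(3)[of "x/(2*(p+1))"] x q0 by simp
      also have "\<dots> = x*p/(2*(p+1))" using q0 by simp
      also have "\<dots> < x" using x q0 by (simp add: field_simps) (smt (verit) mult_pos_pos)
      finally show False by simp
    qed
  qed
qed

lemma sob_arith:
  fixes S D M N :: real
  assumes "0 \<le> S" "0 \<le> D" "0 \<le> M" "0 \<le> N" "S \<le> sqrt M * N"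
    "M \<le> 4* sqrt(S*D)" "N \<le> 4* sqrt(S*D)"
  shows "S \<le> 4096*D^3"
proof (cases "S = 0")
  case True then show ?thesis using assms by simp
next
  case False
  then have Sp: "S > 0" using assms by simp
  have sq: "sqrt(S*D)^2 = S*D" using assms by simp
  have "S^2 \<le> (sqrt M * N)^2" using assms by (intro power_mono) auto
  also have "\<dots> = M * N^2" using assms by (simp add: power_mult_distrib)
  also have "N^2 \<le> (4* sqrt(S*D))^2" using assms by (intro power_mono) auto
  hence "M * N^2 \<le> M * (16*(S*D))" using assms sq by (intro mult_left_mono) (auto simp: power_mult_distrib)
  also have "\<dots> \<le> 4* sqrt(S*D) * (16*(S*D))" using assms by (intro mult_right_mono) auto
  finally have "S*S \<le> S * (64*D* sqrt(S*D))" by (simp add: power2_eq_square algebra_simps)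
  hence h: "S \<le> 64*D* sqrt(S*D)" using Sp by simp
  have "S^2 \<le> (64*D* sqrt(S*D))^2" using h assms by (intro power_mono) auto
  also have "\<dots> = S * (4096*D^3)" using sq by (simp add: power_mult_distrib power2_eq_square power3_eq_cube algebra_simps)
  finally have "S*S \<le> S * (4096*D^3)" by (simp add: power2_eq_square)
  then show ?thesis using Sp by simp
qed



lemma sq_abs_expand: "(l*\<bar>y\<bar>^3 - \<bar>z\<bar>)^2 = l^2*y^6 - 2*l*(\<bar>y\<bar>^3*\<bar>z\<bar>) + (z::real)^2"
  by (simp add: power2_eq_square algebra_simps)

lemma pw_abs3:
  fixes l y z r :: real
  assumes "l > 0" "r \<ge> 0"
  shows "\<bar>y\<bar>^3 * \<bar>z\<bar> * r \<le> l/2 * (y^6 * r) + 1/(2*l) * (z^2 * r)"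
proof -
  have "0 \<le> (l*\<bar>y\<bar>^3 - \<bar>z\<bar>)^2" by simp
  then have "2*l*(\<bar>y\<bar>^3*\<bar>z\<bar>) \<le> l^2*y^6 + z^2" unfolding sq_abs_expand by simp
  then have "\<bar>y\<bar>^3 * \<bar>z\<bar> \<le> l/2 * y^6 + 1/(2*l) * z^2"
    using assms by (simp add: field_simps power2_eq_square)
  then have "\<bar>y\<bar>^3 * \<bar>z\<bar> * r \<le> (l/2 * y^6 + 1/(2*l) * z^2) * r"
    using assms by (intro mult_right_mono) auto
  then show ?thesis by (simp add: algebra_simps)
qed

lemma sobolev:
  fixes g gr gz :: "real \<Rightarrow> real \<Rightarrow> real" and R a :: real
  assumes Rp: "R > 0" and ap: "a > 0"
    and cg: "C2 R a g" and cgr: "C2 R a gr" and cgz: "C2 R a gz"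
    and dr: "\<And>r z. r \<in> {0..R} \<Longrightarrow> z \<in> {-a..a} \<Longrightarrow> ((\<lambda>s. g s z) has_real_derivative gr r z) (at r within {0..R})"
    and dz: "\<And>r z. r \<in> {0..R} \<Longrightarrow> z \<in> {-a..a} \<Longrightarrow> ((\<lambda>s. g r s) has_real_derivative gz r z) (at z within {-a..a})"
    and bR: "\<And>z. z \<in> {-a..a} \<Longrightarrow> g R z = 0"
    and ba: "\<And>r. r \<in> {0..R} \<Longrightarrow> g r (-a) = 0"
  shows "Irect R a (\<lambda>r z. (g r z)^6 * r) \<le> 4096 * (Irect R a (\<lambda>r z. ((gr r z)^2 + (gz r z)^2) * r))^3"
proof -
  define f where "f r z = (g r z)^4" for r z
  define fr where "fr r z = 4 * (g r z)^3 * gr r z" for r z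
  define fz where "fz r z = 4 * (g r z)^3 * gz r z" for r z
  have f_nn: "0 \<le> f r z" for r z unfolding f_def by simp
  have cf: "C2 R a f" unfolding f_def using cg by (auto intro!: continuous_intros)
  have cfr: "C2 R a fr" unfolding fr_def using cg cgr by (auto intro!: continuous_intros)
  have cfz: "C2 R a fz" unfolding fz_def using cg cgz by (auto intro!: continuous_intros)
  have dfr: "((\<lambda>s. f s z) has_real_derivative fr r z) (at r within {0..R})"
    if "r \<in> {0..R}" "z \<in> {-a..a}" for r z
    unfolding f_def fr_def
    using dr[OF that] by (auto intro!: derivative_eq_intros simp: algebra_simps)
  have dfz: "((\<lambda>s. f r s) has_real_derivative fz r z) (at z within {-a..a})"
    if "r \<in> {0..R}" "z \<in> {-a..a}" for r z
    unfolding f_def fz_def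
    using dz[OF that] by (auto intro!: derivative_eq_intros simp: algebra_simps)
  have fR: "f R z = 0" if "z \<in> {-a..a}" for z using bR[OF that] by (simp add: f_def)
  have fa: "f r (-a) = 0" if "r \<in> {0..R}" for r using ba[OF that] by (simp add: f_def)
  define A where "A r = integral {-a..a} (\<lambda>z. \<bar>fz r z\<bar>)" for r
  have cA: "continuous_on {0..R} A"
    unfolding A_def by (rule C2_param_z) (use cfz in \<open>auto intro!: continuous_intros\<close>)
  have step1: "f r z \<le> A r" if r: "r \<in> {0..R}" and z: "z \<in> {-a..a}" for r z
  proof -
    have cz: "continuous_on {-a..a} (\<lambda>s. fz r s)" by (rule C2_slice_z[OF cfz r])
    have sub: "{-a..z} \<subseteq> {-a..a}" using z by auto
    have "f r z - f r (-a) = integral {-a..z} (\<lambda>s. fz r s)"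
      by (rule ftc_real(1)[symmetric]) (use z sub in \<open>auto intro: DERIV_subset[OF dfz[OF r]]\<close>)
    also have "\<dots> \<le> integral {-a..z} (\<lambda>s. \<bar>fz r s\<bar>)"
      by (rule integral_le) (auto intro!: integrable_continuous_interval continuous_intros continuous_on_subset[OF cz sub])
    also have "\<dots> \<le> A r" unfolding A_def
      by (rule integral_subset_le[OF sub]) (auto intro!: integrable_continuous_interval continuous_intros continuous_on_subset[OF cz sub] cz)
    finally show ?thesis using fa[OF r] by simp
  qed
  define Fz where "Fz z = integral {0..R} (\<lambda>s. \<bar>fr s z\<bar> * s)" for z
  have Fz_nn: "0 \<le> Fz z" if "z \<in> {-a..a}" for z
    unfolding Fz_def by (rule integral_nonneg) (auto intro!: integrable_continuous_interval continuous_intros C2_slice_r[OF cfr that])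
  have step2: "r * f r z \<le> Fz z" if r: "r \<in> {0..R}" and z: "z \<in> {-a..a}" for r z
  proof -
    have cr: "continuous_on {0..R} (\<lambda>s. fr s z)" by (rule C2_slice_r[OF cfr z])
    have sub: "{r..R} \<subseteq> {0..R}" using r by auto
    have "f R z - f r z = integral {r..R} (\<lambda>s. fr s z)"
      by (rule ftc_real(1)[symmetric]) (use r sub in \<open>auto intro: DERIV_subset[OF dfr[OF _ z]]\<close>)
    then have "f r z = - integral {r..R} (\<lambda>s. fr s z)" using fR[OF z] by simp
    then have "r * f r z = integral {r..R} (\<lambda>s. - r * fr s z)" by simp
    also have "\<dots> \<le> integral {r..R} (\<lambda>s. \<bar>fr s z\<bar> * s)"
    proof (rule integral_le)
      show "(\<lambda>s. - r * fr s z) integrable_on {r..R}" "(\<lambda>s. \<bar>fr s z\<bar> * s) integrable_on {r..R}"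
        by (auto intro!: integrable_continuous_interval continuous_intros continuous_on_subset[OF cr sub])
      fix s assume s: "s \<in> {r..R}"
      have "- r * fr s z \<le> r * \<bar>fr s z\<bar>" using r by (simp add: abs_if mult_le_0_iff)
      also have "\<dots> \<le> s * \<bar>fr s z\<bar>" using s by (intro mult_right_mono) auto
      finally show "- r * fr s z \<le> \<bar>fr s z\<bar> * s" by (simp add: mult.commute)
    qed
    also have "\<dots> \<le> Fz z" unfolding Fz_def
      by (rule integral_subset_le[OF sub]) (use r in \<open>auto intro!: integrable_continuous_interval continuous_intros continuous_on_subset[OF cr sub] cr\<close>)
    finally show ?thesis .
  qed
  have step3: "integral {0..R} (\<lambda>r. f r z) \<le> Fz z" if z: "z \<in> {-a..a}" for z
  proof -
    have cr: "continuous_on {0..R} (\<lambda>s. fr s z)" by (rule C2_slice_r[OF cfr z])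
    have cf1: "continuous_on {0..R} (\<lambda>s. f s z)" by (rule C2_slice_r[OF cf z])
    have "integral {0..R} (\<lambda>r. f r z + r * fr r z) = R * f R z - 0 * f 0 z"
      by (rule ftc_real(1)) (use Rp in \<open>auto intro!: derivative_eq_intros dfr[OF _ z]\<close>)
    then have e: "integral {0..R} (\<lambda>r. f r z + r * fr r z) = 0" using fR[OF z] by simp
    have "integral {0..R} (\<lambda>r. f r z + r * fr r z) = integral {0..R} (\<lambda>r. f r z) + integral {0..R} (\<lambda>r. r * fr r z)"
      by (rule integral_add) (auto intro!: integrable_continuous_interval continuous_intros cr cf1)
    then have "integral {0..R} (\<lambda>r. f r z) = integral {0..R} (\<lambda>r. - (r * fr r z))"
      using e by simp
    also have "\<dots> \<le> Fz z" unfolding Fz_def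
    proof (rule integral_le)
      show "(\<lambda>s. - (s * fr s z)) integrable_on {0..R}" "(\<lambda>s. \<bar>fr s z\<bar> * s) integrable_on {0..R}"
        by (auto intro!: integrable_continuous_interval continuous_intros cr)
      fix s assume s: "s \<in> {0..R}"
      then show "- (s * fr s z) \<le> \<bar>fr s z\<bar> * s" by (simp add: abs_if mult_le_0_iff)
    qed
    finally show ?thesis .
  qed
  have step4: "integral {0..R} (\<lambda>r. (f r z)^2 * r) \<le> (Fz z)^2" if z: "z \<in> {-a..a}" for z
  proof -
    have cf1: "continuous_on {0..R} (\<lambda>s. f s z)" by (rule C2_slice_r[OF cf z])
    have "integral {0..R} (\<lambda>r. (f r z)^2 * r) \<le> integral {0..R} (\<lambda>r. Fz z * f r z)"
    proof (rule integral_le)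
      show "(\<lambda>r. (f r z)^2 * r) integrable_on {0..R}" "(\<lambda>r. Fz z * f r z) integrable_on {0..R}"
        by (auto intro!: integrable_continuous_interval continuous_intros cf1)
      fix r assume r: "r \<in> {0..R}"
      have "(f r z)^2 * r = f r z * (r * f r z)" by (simp add: power2_eq_square)
      also have "\<dots> \<le> f r z * Fz z" by (intro mult_left_mono step2[OF r z] f_nn)
      finally show "(f r z)^2 * r \<le> Fz z * f r z" by (simp add: mult.commute)
    qed
    also have "\<dots> = Fz z * integral {0..R} (\<lambda>r. f r z)" by simp
    also have "\<dots> \<le> Fz z * Fz z" by (intro mult_left_mono step3[OF z] Fz_nn[OF z])
    finally show ?thesis by (simp add: power2_eq_square)
  qed
  define M where "M = integral {0..R} (\<lambda>r. A r * r)"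
  have step5: "integral {0..R} (\<lambda>r. f r z * r) \<le> M" if z: "z \<in> {-a..a}" for z
    unfolding M_def
    by (rule integral_le) (use step1 z in \<open>auto intro!: integrable_continuous_interval continuous_intros C2_slice_r[OF cf z] cA mult_right_mono\<close>)
  have A_nn: "0 \<le> A r" if r: "r \<in> {0..R}" for r
    unfolding A_def by (rule integral_nonneg) (auto intro!: integrable_continuous_interval continuous_intros C2_slice_z[OF cfz r])
  have M0: "0 \<le> M"
    unfolding M_def by (rule integral_nonneg) (auto intro!: integrable_continuous_interval continuous_intros cA A_nn mult_nonneg_nonneg)
  have step6: "integral {0..R} (\<lambda>r. (g r z)^6 * r) \<le> Fz z * sqrt M" if z: "z \<in> {-a..a}" for z
  proof -
    have cf1: "continuous_on {0..R} (\<lambda>s. f s z)" by (rule C2_slice_r[OF cf z])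
    have cg1: "continuous_on {0..R} (\<lambda>s. g s z)" by (rule C2_slice_r[OF cg z])
    have "integral {0..R} (\<lambda>r. (g r z)^6 * r) \<le> 2 * sqrt ((Fz z)^2/2 * (M/2))"
    proof (rule amgm_opt)
      show "0 \<le> (Fz z)^2/2" by simp
      show "0 \<le> M/2" using M0 by simp
      fix l :: real assume l: "l > 0"
      have "integral {0..R} (\<lambda>r. (g r z)^6 * r) \<le> integral {0..R} (\<lambda>r. l/2 * ((f r z)^2 * r) + 1/(2*l) * (f r z * r))"
      proof (rule integral_le)
        show "(\<lambda>r. (g r z)^6 * r) integrable_on {0..R}" "(\<lambda>r. l/2 * ((f r z)^2 * r) + 1/(2*l) * (f r z * r)) integrable_on {0..R}"
          using l by (auto intro!: integrable_continuous_interval continuous_intros cf1 cg1)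
        fix r assume r: "r \<in> {0..R}"
        have "0 \<le> (l * (g r z)^4 - (g r z)^2)^2" by simp
        also have "(l * (g r z)^4 - (g r z)^2)^2 = l^2*((g r z)^4)^2 - 2*l*(g r z)^6 + (g r z)^4" by algebra
        finally have "2*l*(g r z)^6 \<le> l^2 * ((g r z)^4)^2 + (g r z)^4" by simp
        then have "(g r z)^6 \<le> l/2 * (f r z)^2 + 1/(2*l) * f r z"
          using l by (simp add: f_def field_simps power2_eq_square)
        then have "(g r z)^6 * r \<le> (l/2 * (f r z)^2 + 1/(2*l) * f r z) * r"
          using r by (intro mult_right_mono) auto
        then show "(g r z)^6 * r \<le> l/2 * ((f r z)^2 * r) + 1/(2*l) * (f r z * r)"
          by (simp add: algebra_simps)
      qed
      also have "\<dots> = l/2 * integral {0..R} (\<lambda>r. (f r z)^2 * r) + 1/(2*l) * integral {0..R} (\<lambda>r. f r z * r)"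
        using l by (subst integral_add) (auto intro!: integrable_continuous_interval continuous_intros cf1)
      also have "\<dots> \<le> l/2 * (Fz z)^2 + 1/(2*l) * M"
        using l step4[OF z] step5[OF z] by (intro add_mono mult_left_mono) auto
      finally show "integral {0..R} (\<lambda>r. (g r z)^6 * r) \<le> l * ((Fz z)^2/2) + M/2/l" by simp
    qed
    also have "\<dots> = Fz z * sqrt M"
    proof -
      have e: "(Fz z)^2/2*(M/2) = (Fz z/2)^2 * M" by (simp add: power2_eq_square)
      have "sqrt ((Fz z/2)^2 * M) = Fz z/2 * sqrt M" using Fz_nn[OF z] by (simp add: real_sqrt_mult)
      then show ?thesis unfolding e by simp
    qed
    finally show ?thesis .
  qed
  define S where "S = Irect R a (\<lambda>r z. (g r z)^6 * r)"
  define N where "N = Irect R a (\<lambda>r z. \<bar>fr r z\<bar> * r)"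
  define Dr where "Dr = Irect R a (\<lambda>r z. (gr r z)^2 * r)"
  define Dz where "Dz = Irect R a (\<lambda>r z. (gz r z)^2 * r)"
  define D where "D = Irect R a (\<lambda>r z. ((gr r z)^2 + (gz r z)^2) * r)"
  have c6: "C2 R a (\<lambda>r z. (g r z)^6 * r)" using cg by (auto intro!: continuous_intros)
  have cN: "C2 R a (\<lambda>r z. \<bar>fr r z\<bar> * r)" using cfr by (auto intro!: continuous_intros)
  have cM: "C2 R a (\<lambda>r z. \<bar>fz r z\<bar> * r)" using cfz by (auto intro!: continuous_intros)
  have cDr: "C2 R a (\<lambda>r z. (gr r z)^2 * r)" using cgr by (auto intro!: continuous_intros)
  have cDz: "C2 R a (\<lambda>r z. (gz r z)^2 * r)" using cgz by (auto intro!: continuous_intros)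
  have S0: "0 \<le> S" unfolding S_def by (rule Irect_nonneg[OF c6]) auto
  have N0: "0 \<le> N" unfolding N_def by (rule Irect_nonneg[OF cN]) auto
  have Dr0: "0 \<le> Dr" unfolding Dr_def by (rule Irect_nonneg[OF cDr]) auto
  have Dz0: "0 \<le> Dz" unfolding Dz_def by (rule Irect_nonneg[OF cDz]) auto
  have DD: "D = Dr + Dz" unfolding D_def Dr_def Dz_def
    by (subst Irect_add[symmetric]) (use cDr cDz in \<open>auto simp: algebra_simps\<close>)
  have step7: "S \<le> sqrt M * N"
  proof -
    have "S = integral {-a..a} (\<lambda>z. integral {0..R} (\<lambda>r. (g r z)^6 * r))"
      unfolding S_def by (rule C2_fubini_zr[OF c6])
    also have "\<dots> \<le> integral {-a..a} (\<lambda>z. Fz z * sqrt M)"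
      by (rule integral_le) (use step6 in \<open>auto intro!: integrable_continuous_interval continuous_intros C2_param_r[OF c6] C2_param_r[OF cN, unfolded Fz_def[symmetric]]\<close>)
    also have "\<dots> = sqrt M * integral {-a..a} Fz" by (simp add: mult.commute)
    also have "integral {-a..a} Fz = N" unfolding N_def C2_fubini_zr[OF cN] Fz_def ..
    finally show ?thesis .
  qed
  have MI: "M = Irect R a (\<lambda>r z. \<bar>fz r z\<bar> * r)"
    unfolding C2_fubini_rz[OF cM] M_def A_def by simp
  have c3z: "C2 R a (\<lambda>r z. \<bar>g r z\<bar>^3 * \<bar>gz r z\<bar> * r)" using cg cgz by (auto intro!: continuous_intros)
  have c3r: "C2 R a (\<lambda>r z. \<bar>g r z\<bar>^3 * \<bar>gr r z\<bar> * r)" using cg cgr by (auto intro!: continuous_intros)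
  have step8z: "Irect R a (\<lambda>r z. \<bar>g r z\<bar>^3 * \<bar>gz r z\<bar> * r) \<le> sqrt (S * Dz)"
  proof -
    have "Irect R a (\<lambda>r z. \<bar>g r z\<bar>^3 * \<bar>gz r z\<bar> * r) \<le> 2 * sqrt (S/2 * (Dz/2))"
    proof (rule amgm_opt)
      show "0 \<le> S/2" "0 \<le> Dz/2" using S0 Dz0 by auto
      fix l :: real assume l: "l > 0"
      have "Irect R a (\<lambda>r z. \<bar>g r z\<bar>^3 * \<bar>gz r z\<bar> * r) \<le> Irect R a (\<lambda>r z. l/2 * ((g r z)^6 * r) + 1/(2*l) * ((gz r z)^2 * r))"
        by (rule Irect_mono[OF c3z]) (use l cg cgz pw_abs3 in \<open>auto intro!: continuous_intros\<close>)
      also have "\<dots> = l/2 * S + 1/(2*l) * Dz"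
        unfolding S_def Dz_def Irect_cmult[symmetric]
        by (rule Irect_add) (use l cg cgz in \<open>auto intro!: continuous_intros\<close>)
      finally show "Irect R a (\<lambda>r z. \<bar>g r z\<bar>^3 * \<bar>gz r z\<bar> * r) \<le> l * (S/2) + Dz/2/l" by simp
    qed
    also have "2 * sqrt (S/2 * (Dz/2)) = sqrt (S * Dz)"
    proof -
      have e: "S/2 * (Dz/2) = (S*Dz)/4" by simp
      have "sqrt ((S*Dz)/4) = sqrt (S*Dz) / 2" by (simp add: real_sqrt_divide)
      then show ?thesis unfolding e by simp
    qed
    finally show ?thesis .
  qed
  have step8r: "Irect R a (\<lambda>r z. \<bar>g r z\<bar>^3 * \<bar>gr r z\<bar> * r) \<le> sqrt (S * Dr)"
  proof -
    have "Irect R a (\<lambda>r z. \<bar>g r z\<bar>^3 * \<bar>gr r z\<bar> * r) \<le> 2 * sqrt (S/2 * (Dr/2))"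
    proof (rule amgm_opt)
      show "0 \<le> S/2" "0 \<le> Dr/2" using S0 Dr0 by auto
      fix l :: real assume l: "l > 0"
      have "Irect R a (\<lambda>r z. \<bar>g r z\<bar>^3 * \<bar>gr r z\<bar> * r) \<le> Irect R a (\<lambda>r z. l/2 * ((g r z)^6 * r) + 1/(2*l) * ((gr r z)^2 * r))"
        by (rule Irect_mono[OF c3r]) (use l cg cgr pw_abs3 in \<open>auto intro!: continuous_intros\<close>)
      also have "\<dots> = l/2 * S + 1/(2*l) * Dr"
        unfolding S_def Dr_def Irect_cmult[symmetric]
        by (rule Irect_add) (use l cg cgr in \<open>auto intro!: continuous_intros\<close>)
      finally show "Irect R a (\<lambda>r z. \<bar>g r z\<bar>^3 * \<bar>gr r z\<bar> * r) \<le> l * (S/2) + Dr/2/l" by simp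
    qed
    also have "2 * sqrt (S/2 * (Dr/2)) = sqrt (S * Dr)"
    proof -
      have e: "S/2 * (Dr/2) = (S*Dr)/4" by simp
      have "sqrt ((S*Dr)/4) = sqrt (S*Dr) / 2" by (simp add: real_sqrt_divide)
      then show ?thesis unfolding e by simp
    qed
    finally show ?thesis .
  qed
  have M_le: "M \<le> 4 * sqrt (S * D)"
  proof -
    have "M = 4 * Irect R a (\<lambda>r z. \<bar>g r z\<bar>^3 * \<bar>gz r z\<bar> * r)"
      unfolding MI Irect_cmult[symmetric] by (rule Irect_cong) (simp add: fz_def abs_mult power_abs)
    also have "\<dots> \<le> 4 * sqrt (S * Dz)" using step8z by simp
    also have "\<dots> \<le> 4 * sqrt (S * D)" using DD Dr0 S0 by (simp add: mult_left_mono)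
    finally show ?thesis .
  qed
  have N_le: "N \<le> 4 * sqrt (S * D)"
  proof -
    have "N = 4 * Irect R a (\<lambda>r z. \<bar>g r z\<bar>^3 * \<bar>gr r z\<bar> * r)"
      unfolding N_def Irect_cmult[symmetric] by (rule Irect_cong) (simp add: fr_def abs_mult power_abs)
    also have "\<dots> \<le> 4 * sqrt (S * Dr)" using step8r by simp
    also have "\<dots> \<le> 4 * sqrt (S * D)" using DD Dz0 S0 by (simp add: mult_left_mono)
    finally show ?thesis .
  qed
  have "S \<le> 4096 * D^3"
    by (rule sob_arith[OF S0 _ M0 N0 step7 M_le N_le]) (use DD Dr0 Dz0 in simp)
  then show ?thesis unfolding S_def D_def .
qed



lemma holder_opt:
  fixes p q x :: real
  assumes p0: "0 \<le> p" and q0: "0 \<le> q"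
    and H: "\<And>k. k > 0 \<Longrightarrow> x \<le> 5/6 * (k powr (-6/5) * p) + 1/6 * (k^6 * q)"
  shows "x \<le> p powr (5/6) * q powr (1/6)"
proof (cases "p > 0 \<and> q > 0")
  case True
  define k where "k = (p/q) powr (5/36)"
  have kp: "k > 0" using True by (simp add: k_def)
  have k1: "k powr (-6/5) * p = p powr (5/6) * q powr (1/6)"
  proof -
    have "k powr (-6/5) = (p/q) powr (-1/6)" unfolding k_def by (simp add: powr_powr)
    also have "\<dots> = p powr (-1/6) * q powr (1/6)" using True
      by (simp add: powr_divide powr_minus divide_simps)
    finally have "k powr (-6/5) * p = p powr (-1/6) * p powr 1 * q powr (1/6)" using True by simp
    also have "p powr (-1/6) * p powr 1 = p powr (5/6)" unfolding powr_add[symmetric] by simp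
    finally show ?thesis .
  qed
  have k2: "k^6 * q = p powr (5/6) * q powr (1/6)"
  proof -
    have "k^6 = k powr 6" using kp by (simp add: powr_realpow)
    also have "\<dots> = (p/q) powr (5/6)" unfolding k_def by (simp add: powr_powr)
    also have "\<dots> = p powr (5/6) * q powr (-5/6)" using True
      by (simp add: powr_divide powr_minus divide_simps)
    finally have "k^6 * q = p powr (5/6) * (q powr (-5/6) * q powr 1)" using True by simp
    also have "q powr (-5/6) * q powr 1 = q powr (1/6)" unfolding powr_add[symmetric] by simp
    finally show ?thesis .
  qed
  show ?thesis using H[OF kp] unfolding k1 k2 by linarith
next
  case False
  have "x \<le> 0"
  proof (rule ccontr)
    assume "\<not> x \<le> 0"
    then have x: "x > 0" by simp
    show False
    proof (cases "p = 0")
      case True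
      define k where "k = min 1 (x / (q+1))"
      have kp: "k > 0" "k \<le> 1" using x q0 by (auto simp: k_def)
      have k5: "k^5 \<le> 1" using kp by (simp add: power_le_one)
      have "k^6 = k * k^5" by (simp add: numeral_eq_Suc)
      also have "\<dots> \<le> k * 1" using k5 kp by (intro mult_left_mono) auto
      finally have "k^6 \<le> k" by simp
      have "x \<le> 1/6 * (k^6 * q)" using H[OF kp(1)] True by simp
      also have "\<dots> \<le> k * q"
      proof -
        have a1: "k^6*q \<le> k*q" using mult_right_mono[OF \<open>k^6 \<le> k\<close> q0] .
        have a2: "0 \<le> k*q" using kp q0 by simp
        show ?thesis using a1 a2 by linarith
      qed
      also have "\<dots> \<le> x / (q+1) * q" using q0 by (intro mult_right_mono) (auto simp: k_def)
      also have "\<dots> < x" using x q0 by (simp add: field_simps)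
      finally show False by simp
    next
      case False
      then have q00: "q = 0" "p > 0" using \<open>\<not> (p > 0 \<and> q > 0)\<close> p0 q0 by auto
      define k where "k = (2*p/x) powr (5/6)"
      have kp: "k > 0" using q00 x by (simp add: k_def)
      have "k powr (-6/5) = (2*p/x) powr (-1)" unfolding k_def by (simp add: powr_powr)
      also have "\<dots> = x/(2*p)" using q00 x by (simp add: powr_minus_divide)
      finally have "x \<le> 5/6 * (x/(2*p) * p)" using H[OF kp] q00 by simp
      also have "\<dots> < x" using x q00 by simp
      finally show False by simp
    qed
  qed
  moreover have "0 \<le> p powr (5/6) * q powr (1/6)" by simp
  ultimately show ?thesis by linarith
qed

lemma young65:
  fixes F w k :: real
  assumes "k > 0"
  shows "\<bar>F\<bar> * \<bar>w\<bar> \<le> 5/6 * (k powr (-6/5) * (\<bar>F\<bar> powr (6/5))) + 1/6 * (k^6 * w^6)"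
proof -
  have "(\<bar>F\<bar>/k) * (k*\<bar>w\<bar>) \<le> (\<bar>F\<bar>/k) powr (6/5) / (6/5) + (k*\<bar>w\<bar>) powr 6 / 6"
    by (rule Youngs_inequality) (use assms in auto)
  also have "(\<bar>F\<bar>/k) powr (6/5) = k powr (-6/5) * \<bar>F\<bar> powr (6/5)"
    using assms by (simp add: powr_divide powr_minus divide_simps)
  also have "(k*\<bar>w\<bar>) powr 6 = k^6 * w^6"
  proof (cases "w = 0")
    case True then show ?thesis by simp
  next
    case False
    then have "k*\<bar>w\<bar> > 0" using assms by simp
    then have "(k*\<bar>w\<bar>) powr 6 = (k*\<bar>w\<bar>)^6" by (simp add: powr_realpow)
    then show ?thesis by (simp add: power_mult_distrib power_abs)
  qed
  finally show ?thesis using assms by simp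
qed

lemma C2_powr:
  assumes "C2 R a F"
  shows "C2 R a (\<lambda>r z. \<bar>F r z\<bar> powr (6/5) * r)"
  using assms by (auto intro!: continuous_intros continuous_on_powr')

lemma four_sqrt:
  fixes D :: real assumes "D \<ge> 0"
  shows "(4096 * D^3) powr (1/6) = 4 * sqrt D"
proof (cases "D = 0")
  case True then show ?thesis by simp
next
  case False
  then have xp: "4 * sqrt D > 0" using assms by simp
  have "4096 * D^3 = (4 * sqrt D)^6"
  proof -
    have "(sqrt D)^6 = ((sqrt D)^2)^3" unfolding power_mult[symmetric] by simp
    also have "\<dots> = D^3" using assms by simp
    finally show ?thesis by (simp add: power_mult_distrib)
  qed
  also have "\<dots> = (4 * sqrt D) powr 6" using xp by (simp add: powr_realpow)
  finally have e: "4096 * D^3 = (4 * sqrt D) powr 6" .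
  show ?thesis unfolding e powr_powr using xp by simp
qed



lemma Irect_lin4:
  assumes "C2 R a A" "C2 R a B" "C2 R a C" "C2 R a E"
  shows "Irect R a (\<lambda>r z. A r z + nu * B r z + C r z - E r z) = Irect R a A + nu * Irect R a B + Irect R a C - Irect R a E"
  using assms unfolding Irect_def
  by (subst integral_diff integral_add, (auto intro!: C2_integrable continuous_intros)[2])+ simp

lemma energy2d:
  fixes R a nu :: real and vr vrr vz vzz w wr wz wrr wzz wt u uz F :: "real \<Rightarrow> real \<Rightarrow> real"
  assumes Rp: "R > 0" and ap: "a > 0"
    and c: "C2 R a vr" "C2 R a vrr" "C2 R a vz" "C2 R a vzz" "C2 R a w" "C2 R a wr" "C2 R a wz"
      "C2 R a wrr" "C2 R a wzz" "C2 R a wt" "C2 R a u" "C2 R a uz" "C2 R a F"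
    and dvr: "\<And>r z. r \<in> {0..R} \<Longrightarrow> z \<in> {-a..a} \<Longrightarrow> ((\<lambda>s. vr s z) has_real_derivative vrr r z) (at r within {0..R})"
    and dvz: "\<And>r z. r \<in> {0..R} \<Longrightarrow> z \<in> {-a..a} \<Longrightarrow> ((\<lambda>s. vz r s) has_real_derivative vzz r z) (at z within {-a..a})"
    and dwr: "\<And>r z. r \<in> {0..R} \<Longrightarrow> z \<in> {-a..a} \<Longrightarrow> ((\<lambda>s. w s z) has_real_derivative wr r z) (at r within {0..R})"
    and dwz: "\<And>r z. r \<in> {0..R} \<Longrightarrow> z \<in> {-a..a} \<Longrightarrow> ((\<lambda>s. w r s) has_real_derivative wz r z) (at z within {-a..a})"
    and dwrr: "\<And>r z. r \<in> {0..R} \<Longrightarrow> z \<in> {-a..a} \<Longrightarrow> ((\<lambda>s. wr s z) has_real_derivative wrr r z) (at r within {0..R})"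
    and dwzz: "\<And>r z. r \<in> {0..R} \<Longrightarrow> z \<in> {-a..a} \<Longrightarrow> ((\<lambda>s. wz r s) has_real_derivative wzz r z) (at z within {-a..a})"
    and duz: "\<And>r z. r \<in> {0..R} \<Longrightarrow> z \<in> {-a..a} \<Longrightarrow> ((\<lambda>s. u r s) has_real_derivative uz r z) (at z within {-a..a})"
    and bvr: "\<And>z. z \<in> {-a..a} \<Longrightarrow> vr R z = 0"
    and bwR: "\<And>z. z \<in> {-a..a} \<Longrightarrow> w R z = 0"
    and bw: "\<And>r. r \<in> {0..R} \<Longrightarrow> w r a = 0 \<and> w r (-a) = 0"
    and div: "\<And>r z. r \<in> {0..R} \<Longrightarrow> z \<in> {-a..a} \<Longrightarrow> vr r z + r * vrr r z + r * vzz r z = 0"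
    and eq: "\<And>r z. r \<in> {0..R} \<Longrightarrow> z \<in> {-a..a} \<Longrightarrow>
      r * wt r z + r * (vr r z * wr r z + vz r z * wz r z) - nu * (r * wrr r z + 3 * wr r z + r * wzz r z)
      = r * (2 * u r z * uz r z + F r z)"
  shows "Irect R a (\<lambda>r z. w r z * wt r z * r) =
     - nu * Irect R a (\<lambda>r z. ((wr r z)^2 + (wz r z)^2) * r) - nu * integral {-a..a} (\<lambda>z. (w 0 z)^2)
     - Irect R a (\<lambda>r z. (u r z)^2 * wz r z * r) + Irect R a (\<lambda>r z. w r z * F r z * r)"
proof -
  define Hr where "Hr r z = -(vr r z * (w r z)^2/2 + r * vrr r z * (w r z)^2/2 + r * vr r z * w r z * wr r z)
      + nu * (r * w r z * wrr r z + 3 * w r z * wr r z + r * (wr r z)^2)" for r z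
  define Hz where "Hz r z = -(r * vzz r z * (w r z)^2/2 + r * vz r z * w r z * wz r z)
      + nu * (r * (wz r z)^2 + r * w r z * wzz r z) + (2 * r * u r z * uz r z * w r z + r * (u r z)^2 * wz r z)" for r z
  define Pr where "Pr r z = -(r * vr r z * (w r z)^2/2) + nu * (r * w r z * wr r z + (w r z)^2)" for r z
  define Pz where "Pz r z = -(r * vz r z * (w r z)^2/2) + nu * (r * w r z * wz r z) + r * (u r z)^2 * w r z" for r z
  have cHr: "C2 R a Hr" unfolding Hr_def using c by (auto intro!: continuous_intros)
  have cHz: "C2 R a Hz" unfolding Hz_def using c by (auto intro!: continuous_intros)
  have dPr: "((\<lambda>s. Pr s z) has_real_derivative Hr r z) (at r within {0..R})"
    if r: "r \<in> {0..R}" and z: "z \<in> {-a..a}" for r z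
    unfolding Pr_def Hr_def
    by (auto intro!: derivative_eq_intros dvr[OF r z] dwr[OF r z] dwrr[OF r z] simp: algebra_simps power2_eq_square)
  have dPz: "((\<lambda>s. Pz r s) has_real_derivative Hz r z) (at z within {-a..a})"
    if r: "r \<in> {0..R}" and z: "z \<in> {-a..a}" for r z
    unfolding Pz_def Hz_def
    by (auto intro!: derivative_eq_intros dvz[OF r z] dwz[OF r z] dwzz[OF r z] duz[OF r z] simp: algebra_simps power2_eq_square)
  have IHr: "Irect R a Hr = - nu * integral {-a..a} (\<lambda>z. (w 0 z)^2)"
  proof -
    have "Irect R a Hr = integral {-a..a} (\<lambda>z. integral {0..R} (\<lambda>r. Hr r z))"
      by (rule C2_fubini_zr[OF cHr])
    also have "\<dots> = integral {-a..a} (\<lambda>z. - nu * (w 0 z)^2)"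
    proof (rule integral_cong)
      fix z assume z: "z \<in> {-a..a}"
      have "integral {0..R} (\<lambda>r. Hr r z) = Pr R z - Pr 0 z"
        by (rule ftc_real(1)) (use Rp dPr z in auto)
      also have "\<dots> = - nu * (w 0 z)^2" using bwR[OF z] by (simp add: Pr_def)
      finally show "integral {0..R} (\<lambda>r. Hr r z) = - nu * (w 0 z)^2" .
    qed
    also have "\<dots> = - nu * integral {-a..a} (\<lambda>z. (w 0 z)^2)" by simp
    finally show ?thesis .
  qed
  have IHz: "Irect R a Hz = 0"
  proof -
    have "Irect R a Hz = integral {0..R} (\<lambda>r. integral {-a..a} (\<lambda>z. Hz r z))"
      by (rule C2_fubini_rz[OF cHz])
    also have "\<dots> = integral {0..R} (\<lambda>r. 0)"
    proof (rule integral_cong)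
      fix r assume r: "r \<in> {0..R}"
      have "integral {-a..a} (\<lambda>z. Hz r z) = Pz r a - Pz r (-a)"
        by (rule ftc_real(1)) (use ap dPz r in auto)
      also have "\<dots> = 0" using bw[OF r] by (simp add: Pz_def)
      finally show "integral {-a..a} (\<lambda>z. Hz r z) = 0" .
    qed
    finally show ?thesis by simp
  qed
  have G: "Irect R a (\<lambda>r z. w r z * wt r z * r + nu * (((wr r z)^2 + (wz r z)^2) * r) + (u r z)^2 * wz r z * r - w r z * F r z * r)
      = Irect R a (\<lambda>r z. Hr r z + Hz r z)"
  proof (rule Irect_cong)
    fix r z assume r: "r \<in> {0..R}" and z: "z \<in> {-a..a}"
    have e: "w r z * (r * wt r z + r * (vr r z * wr r z + vz r z * wz r z) - nu * (r * wrr r z + 3 * wr r z + r * wzz r z)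
      - r * (2 * u r z * uz r z + F r z)) = 0" using eq[OF r z] by simp
    have d: "(w r z)^2/2 * (vr r z + r * vrr r z + r * vzz r z) = 0" using div[OF r z] by simp
    have "w r z * wt r z * r + nu * (((wr r z)^2 + (wz r z)^2) * r) + (u r z)^2 * wz r z * r - w r z * F r z * r
      = Hr r z + Hz r z + w r z * (r * wt r z + r * (vr r z * wr r z + vz r z * wz r z) - nu * (r * wrr r z + 3 * wr r z + r * wzz r z)
      - r * (2 * u r z * uz r z + F r z)) + (w r z)^2/2 * (vr r z + r * vrr r z + r * vzz r z)"
      unfolding Hr_def Hz_def by (simp add: algebra_simps power2_eq_square)
    then show "w r z * wt r z * r + nu * (((wr r z)^2 + (wz r z)^2) * r) + (u r z)^2 * wz r z * r - w r z * F r z * r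
      = Hr r z + Hz r z" using e d by simp
  qed
  have L: "Irect R a (\<lambda>r z. w r z * wt r z * r + nu * (((wr r z)^2 + (wz r z)^2) * r) + (u r z)^2 * wz r z * r - w r z * F r z * r)
     = Irect R a (\<lambda>r z. w r z * wt r z * r) + nu * Irect R a (\<lambda>r z. ((wr r z)^2 + (wz r z)^2) * r)
       + Irect R a (\<lambda>r z. (u r z)^2 * wz r z * r) - Irect R a (\<lambda>r z. w r z * F r z * r)"
    by (rule Irect_lin4) (use c in \<open>auto intro!: continuous_intros\<close>)
  have "Irect R a (\<lambda>r z. Hr r z + Hz r z) = Irect R a Hr + Irect R a Hz"
    by (rule Irect_add[OF cHr cHz])
  then show ?thesis using G L IHr IHz by linarith
qed



lemma Irect_lin2:
  assumes "C2 R a A" "C2 R a B"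
  shows "Irect R a (\<lambda>r z. c1 * A r z + c2 * B r z) = c1 * Irect R a A + c2 * Irect R a B"
  using assms unfolding Irect_def
  by (subst integral_add, (auto intro!: C2_integrable continuous_intros)[2]) simp

lemma Irect_minus: "Irect R a (\<lambda>r z. - f r z) = - Irect R a f"
  unfolding Irect_def by (simp add: integral_neg)

lemma amgm_F:
  fixes P Y nu :: real assumes "nu > 0"
  shows "4 * P * Y \<le> nu/4 * Y^2 + 16/nu * P^2"
proof -
  have "0 \<le> (nu * Y - 8 * P)^2 / (4 * nu)" using assms by simp
  also have "(nu * Y - 8 * P)^2 / (4 * nu) = nu/4 * Y^2 + 16/nu * P^2 - 4 * P * Y"
    using assms by (simp add: field_simps power2_eq_square)
  finally show ?thesis by simp
qed

lemma sq_id: "(nu::real) \<noteq> 0 \<Longrightarrow> (nu*x/2 + y^2)^2 = nu*(nu/4*x^2 + 1/nu*y^4 + y^2*x)"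
  by (simp add: field_simps power2_eq_square) algebra

lemma ineq2d:
  fixes R a nu :: real and vr vrr vz vzz w wr wz wrr wzz wt u uz F :: "real \<Rightarrow> real \<Rightarrow> real"
  assumes Rp: "R > 0" and ap: "a > 0" and nup: "nu > 0"
    and c: "C2 R a vr" "C2 R a vrr" "C2 R a vz" "C2 R a vzz" "C2 R a w" "C2 R a wr" "C2 R a wz"
      "C2 R a wrr" "C2 R a wzz" "C2 R a wt" "C2 R a u" "C2 R a uz" "C2 R a F"
    and dvr: "\<And>r z. r \<in> {0..R} \<Longrightarrow> z \<in> {-a..a} \<Longrightarrow> ((\<lambda>s. vr s z) has_real_derivative vrr r z) (at r within {0..R})"
    and dvz: "\<And>r z. r \<in> {0..R} \<Longrightarrow> z \<in> {-a..a} \<Longrightarrow> ((\<lambda>s. vz r s) has_real_derivative vzz r z) (at z within {-a..a})"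
    and dwr: "\<And>r z. r \<in> {0..R} \<Longrightarrow> z \<in> {-a..a} \<Longrightarrow> ((\<lambda>s. w s z) has_real_derivative wr r z) (at r within {0..R})"
    and dwz: "\<And>r z. r \<in> {0..R} \<Longrightarrow> z \<in> {-a..a} \<Longrightarrow> ((\<lambda>s. w r s) has_real_derivative wz r z) (at z within {-a..a})"
    and dwrr: "\<And>r z. r \<in> {0..R} \<Longrightarrow> z \<in> {-a..a} \<Longrightarrow> ((\<lambda>s. wr s z) has_real_derivative wrr r z) (at r within {0..R})"
    and dwzz: "\<And>r z. r \<in> {0..R} \<Longrightarrow> z \<in> {-a..a} \<Longrightarrow> ((\<lambda>s. wz r s) has_real_derivative wzz r z) (at z within {-a..a})"
    and duz: "\<And>r z. r \<in> {0..R} \<Longrightarrow> z \<in> {-a..a} \<Longrightarrow> ((\<lambda>s. u r s) has_real_derivative uz r z) (at z within {-a..a})"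
    and bvr: "\<And>z. z \<in> {-a..a} \<Longrightarrow> vr R z = 0"
    and bwR: "\<And>z. z \<in> {-a..a} \<Longrightarrow> w R z = 0"
    and bw: "\<And>r. r \<in> {0..R} \<Longrightarrow> w r a = 0 \<and> w r (-a) = 0"
    and div: "\<And>r z. r \<in> {0..R} \<Longrightarrow> z \<in> {-a..a} \<Longrightarrow> vr r z + r * vrr r z + r * vzz r z = 0"
    and eq: "\<And>r z. r \<in> {0..R} \<Longrightarrow> z \<in> {-a..a} \<Longrightarrow>
      r * wt r z + r * (vr r z * wr r z + vz r z * wz r z) - nu * (r * wrr r z + 3 * wr r z + r * wzz r z)
      = r * (2 * u r z * uz r z + F r z)"
  shows "Irect R a (\<lambda>r z. w r z * wt r z * r) \<le>
     - (nu/2) * Irect R a (\<lambda>r z. ((wr r z)^2 + (wz r z)^2) * r) - nu * integral {-a..a} (\<lambda>z. (w 0 z)^2)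
     + 1/nu * Irect R a (\<lambda>r z. (u r z)^4 * r)
     + 16/nu * (Irect R a (\<lambda>r z. \<bar>F r z\<bar> powr (6/5) * r)) powr (5/3)"
proof -
  define D where "D = Irect R a (\<lambda>r z. ((wr r z)^2 + (wz r z)^2) * r)"
  define U where "U = Irect R a (\<lambda>r z. (u r z)^4 * r)"
  define \<Phi> where "\<Phi> = Irect R a (\<lambda>r z. \<bar>F r z\<bar> powr (6/5) * r)"
  define S where "S = Irect R a (\<lambda>r z. (w r z)^6 * r)"
  have cD: "C2 R a (\<lambda>r z. ((wr r z)^2 + (wz r z)^2) * r)" using c by (auto intro!: continuous_intros)
  have cU: "C2 R a (\<lambda>r z. (u r z)^4 * r)" using c by (auto intro!: continuous_intros)
  have cPhi: "C2 R a (\<lambda>r z. \<bar>F r z\<bar> powr (6/5) * r)" by (rule C2_powr) (use c in auto)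
  have cS: "C2 R a (\<lambda>r z. (w r z)^6 * r)" using c by (auto intro!: continuous_intros)
  have D0: "0 \<le> D" unfolding D_def by (rule Irect_nonneg[OF cD]) auto
  have Phi0: "0 \<le> \<Phi>" unfolding \<Phi>_def by (rule Irect_nonneg[OF cPhi]) auto
  have S0: "0 \<le> S" unfolding S_def by (rule Irect_nonneg[OF cS]) auto
  have E: "Irect R a (\<lambda>r z. w r z * wt r z * r) =
     - nu * D - nu * integral {-a..a} (\<lambda>z. (w 0 z)^2)
     - Irect R a (\<lambda>r z. (u r z)^2 * wz r z * r) + Irect R a (\<lambda>r z. w r z * F r z * r)"
    unfolding D_def by (rule energy2d[OF Rp ap c dvr dvz dwr dwz dwrr dwzz duz bvr bwR bw div eq])
  have I3: "- Irect R a (\<lambda>r z. (u r z)^2 * wz r z * r) \<le> nu/4 * D + 1/nu * U"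
  proof -
    have "Irect R a (\<lambda>r z. - ((u r z)^2 * wz r z * r)) \<le> Irect R a (\<lambda>r z. nu/4 * (((wr r z)^2 + (wz r z)^2) * r) + 1/nu * ((u r z)^4 * r))"
    proof (rule Irect_mono)
      show "C2 R a (\<lambda>r z. - ((u r z)^2 * wz r z * r))" using c by (auto intro!: continuous_intros)
      show "C2 R a (\<lambda>r z. nu/4 * (((wr r z)^2 + (wz r z)^2) * r) + 1/nu * ((u r z)^4 * r))"
        using c nup by (auto intro!: continuous_intros)
      fix r z assume r: "r \<in> {0..R}" and z: "z \<in> {-a..a}"
      have "0 \<le> (nu * wz r z / 2 + (u r z)^2)^2" by simp
      also have "(nu * wz r z / 2 + (u r z)^2)^2 = nu * (nu/4 * (wz r z)^2 + 1/nu * (u r z)^4 + (u r z)^2 * wz r z)"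
        by (rule sq_id) (use nup in simp)
      finally have h: "0 \<le> nu/4 * (wz r z)^2 + 1/nu * (u r z)^4 + (u r z)^2 * wz r z"
        using nup by (simp add: zero_le_mult_iff)
      have h2: "0 \<le> nu/4 * (wr r z)^2" using nup by simp
      have h3: "nu/4 * ((wr r z)^2 + (wz r z)^2) = nu/4 * (wr r z)^2 + nu/4 * (wz r z)^2" by (simp add: ring_distribs)
      have "- ((u r z)^2 * wz r z) \<le> nu/4 * ((wr r z)^2 + (wz r z)^2) + 1/nu * (u r z)^4"
        using h h2 h3 by linarith
      then have "- ((u r z)^2 * wz r z) * r \<le> (nu/4 * ((wr r z)^2 + (wz r z)^2) + 1/nu * (u r z)^4) * r"
        using r by (intro mult_right_mono) auto
      then show "- ((u r z)^2 * wz r z * r) \<le> nu/4 * (((wr r z)^2 + (wz r z)^2) * r) + 1/nu * ((u r z)^4 * r)"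
        by (simp add: algebra_simps)
    qed
    also have "\<dots> = nu/4 * D + 1/nu * U" unfolding D_def U_def by (rule Irect_lin2[OF cD cU])
    finally show ?thesis unfolding Irect_minus .
  qed
  have sob: "S \<le> 4096 * D^3"
    unfolding S_def D_def
    by (rule sobolev[OF Rp ap c(5) c(6) c(7) dwr dwz bwR]) (use bw in auto)
  define X where "X = Irect R a (\<lambda>r z. \<bar>F r z\<bar> * \<bar>w r z\<bar> * r)"
  have cX: "C2 R a (\<lambda>r z. \<bar>F r z\<bar> * \<bar>w r z\<bar> * r)" using c by (auto intro!: continuous_intros)
  have I4a: "Irect R a (\<lambda>r z. w r z * F r z * r) \<le> X"
    unfolding X_def
  proof (rule Irect_mono)
    show "C2 R a (\<lambda>r z. w r z * F r z * r)" using c by (auto intro!: continuous_intros)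
    show "C2 R a (\<lambda>r z. \<bar>F r z\<bar> * \<bar>w r z\<bar> * r)" by (rule cX)
    fix r z assume r: "r \<in> {0..R}" and z: "z \<in> {-a..a}"
    have "w r z * F r z \<le> \<bar>F r z\<bar> * \<bar>w r z\<bar>"
      by (metis abs_ge_self abs_mult mult.commute)
    then show "w r z * F r z * r \<le> \<bar>F r z\<bar> * \<bar>w r z\<bar> * r" using r by (intro mult_right_mono) auto
  qed
  have X1: "X \<le> \<Phi> powr (5/6) * S powr (1/6)"
  proof (rule holder_opt[OF Phi0 S0])
    fix k :: real assume k: "k > 0"
    have "X \<le> Irect R a (\<lambda>r z. (5/6 * k powr (-6/5)) * (\<bar>F r z\<bar> powr (6/5) * r) + (1/6 * k^6) * ((w r z)^6 * r))"
      unfolding X_def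
    proof (rule Irect_mono[OF cX])
      show "C2 R a (\<lambda>r z. (5/6 * k powr (-6/5)) * (\<bar>F r z\<bar> powr (6/5) * r) + (1/6 * k^6) * ((w r z)^6 * r))"
        using cPhi cS by (auto intro!: continuous_intros)
      fix r z assume r: "r \<in> {0..R}" and z: "z \<in> {-a..a}"
      have "\<bar>F r z\<bar> * \<bar>w r z\<bar> * r \<le> (5/6 * (k powr (-6/5) * (\<bar>F r z\<bar> powr (6/5))) + 1/6 * (k^6 * (w r z)^6)) * r"
        using r by (intro mult_right_mono young65[OF k]) auto
      then show "\<bar>F r z\<bar> * \<bar>w r z\<bar> * r \<le> (5/6 * k powr (-6/5)) * (\<bar>F r z\<bar> powr (6/5) * r) + (1/6 * k^6) * ((w r z)^6 * r)"
        by (simp add: algebra_simps)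
    qed
    also have "\<dots> = (5/6 * k powr (-6/5)) * \<Phi> + (1/6 * k^6) * S"
      unfolding \<Phi>_def S_def by (rule Irect_lin2[OF cPhi cS])
    finally show "X \<le> 5/6 * (k powr (-6/5) * \<Phi>) + 1/6 * (k^6 * S)" by (simp add: algebra_simps)
  qed
  have "S powr (1/6) \<le> (4096 * D^3) powr (1/6)" using sob S0 by (intro powr_mono2) auto
  also have "\<dots> = 4 * sqrt D" by (rule four_sqrt[OF D0])
  finally have "X \<le> \<Phi> powr (5/6) * (4 * sqrt D)" using X1 by (smt (verit) mult_left_mono powr_ge_zero)
  also have "\<dots> = 4 * (\<Phi> powr (5/6)) * sqrt D" by simp
  also have "\<dots> \<le> nu/4 * (sqrt D)^2 + 16/nu * (\<Phi> powr (5/6))^2" by (rule amgm_F[OF nup])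
  also have "(sqrt D)^2 = D" using D0 by simp
  also have "(\<Phi> powr (5/6))^2 = \<Phi> powr (5/3)"
    by (simp add: power2_eq_square powr_add[symmetric])
  finally have I4: "Irect R a (\<lambda>r z. w r z * F r z * r) \<le> nu/4 * D + 16/nu * \<Phi> powr (5/3)" using I4a by linarith
  show ?thesis
    using E I3 I4 unfolding D_def[symmetric] U_def[symmetric] \<Phi>_def[symmetric] by linarith
qed



abbreviation C3 :: "real \<Rightarrow> real \<Rightarrow> real \<Rightarrow> (real \<Rightarrow> real \<Rightarrow> real \<Rightarrow> real) \<Rightarrow> bool" where
  "C3 R a t h \<equiv> continuous_on (stbox R a t) (\<lambda>x. h (fst x) (fst (snd x)) (snd (snd x)))"

lemma C3_of: "continuous_on (stbox R a t) (\<lambda>(r, z, \<tau>). h r z \<tau>) \<Longrightarrow> C3 R a t h"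
  by (simp add: split_beta')

lemma C3_C2:
  assumes "C3 R a t h" "\<tau> \<in> {0..t}"
  shows "C2 R a (\<lambda>r z. h r z \<tau>)"
proof -
  have "continuous_on ({0..R} \<times> {-a..a}) ((\<lambda>x. h (fst x) (fst (snd x)) (snd (snd x))) \<circ> (\<lambda>p. (fst p, snd p, \<tau>)))"
    by (rule continuous_on_compose) (use assms(2) in \<open>auto intro!: continuous_intros continuous_on_subset[OF assms(1)] simp: stbox_def\<close>)
  then show ?thesis by (simp add: o_def)
qed

lemma C3_param:
  assumes "C3 R a t h"
  shows "continuous_on ({0..t} \<times> ({0..R} \<times> {-a..a})) (\<lambda>x. h (fst (snd x)) (snd (snd x)) (fst x))"
proof -
  have "continuous_on ({0..t} \<times> ({0..R} \<times> {-a..a})) ((\<lambda>x. h (fst x) (fst (snd x)) (snd (snd x))) \<circ> (\<lambda>x. (fst (snd x), snd (snd x), fst x)))"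
    by (rule continuous_on_compose) (auto intro!: continuous_intros continuous_on_subset[OF assms(1)] simp: stbox_def)
  then show ?thesis by (simp add: o_def)
qed

lemma C3_axis:
  assumes "C3 R a t h" "R > 0"
  shows "continuous_on ({0..t} \<times> {-a..a}) (\<lambda>x. h 0 (snd x) (fst x))"
proof -
  have "continuous_on ({0..t} \<times> {-a..a}) ((\<lambda>x. h (fst x) (fst (snd x)) (snd (snd x))) \<circ> (\<lambda>x. (0, snd x, fst x)))"
    by (rule continuous_on_compose) (use assms(2) in \<open>auto intro!: continuous_intros continuous_on_subset[OF assms(1)] simp: stbox_def\<close>)
  then show ?thesis by (simp add: o_def)
qed

lemma Irect_cont_time:
  assumes "continuous_on ({0..t} \<times> ({0..R} \<times> {-a..a})) (\<lambda>x. G (fst (snd x)) (snd (snd x)) (fst x))"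
  shows "continuous_on {0..t} (\<lambda>\<tau>. Irect R a (\<lambda>r z. G r z \<tau>))"
proof -
  have "continuous_on ({0..t} \<times> cbox (0, -a) (R, a)) (\<lambda>(\<tau>, p). G (fst p) (snd p) \<tau>)"
    using assms unfolding rect_cbox by (simp add: split_beta')
  from integral_continuous_on_param[OF this] show ?thesis
    unfolding Irect_def rect_cbox by simp
qed

lemma clos3:
  fixes H :: "real \<Rightarrow> real \<Rightarrow> real \<Rightarrow> real"
  assumes "R > 0" "a > 0" "t > 0" "C3 R a t H"
    and "\<And>r z \<tau>. 0 < r \<Longrightarrow> r < R \<Longrightarrow> -a < z \<Longrightarrow> z < a \<Longrightarrow> 0 < \<tau> \<Longrightarrow> \<tau> < t \<Longrightarrow> H r z \<tau> = 0"
    and "r \<in> {0..R}" "z \<in> {-a..a}" "\<tau> \<in> {0..t}"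
  shows "H r z \<tau> = 0"
proof -
  define S where "S = {0<..<R} \<times> {-a<..<a} \<times> {0<..<t}"
  have cl: "closure S = stbox R a t" using assms(1-3)
    unfolding S_def stbox_def by (simp add: closure_Times)
  have 1: "continuous_on (closure S) (\<lambda>x. H (fst x) (fst (snd x)) (snd (snd x)))" unfolding cl by (rule assms(4))
  have 2: "\<And>x. x \<in> S \<Longrightarrow> H (fst x) (fst (snd x)) (snd (snd x)) = 0" using assms(5) by (auto simp: S_def)
  have 3: "(r, z, \<tau>) \<in> closure S" unfolding cl using assms(6-8) by (auto simp: stbox_def)
  have "(\<lambda>x. H (fst x) (fst (snd x)) (snd (snd x))) (r, z, \<tau>) = 0"
    by (rule continuous_constant_on_closure[OF 1 2 3])
  then show ?thesis by simp
qed

lemma final_arith: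
  fixes p nu A0 A1 Dd Zz Uu Pp Qq :: real
  assumes nu: "nu > 0" and p: "p > 1" and Z: "Zz \<ge> 0" and A0: "A0 \<ge> 0" and PQ: "Pp \<le> Qq"
    and H: "A1 - A0 \<le> 2 * ((- (nu/2)) * Dd + (- nu) * Zz + (1/nu) * Uu + (16/nu) * Pp)"
  shows "1/2 * (2*p*A1) + nu/2 * (2*p*Dd) + nu * Zz \<le> 1/nu * (2*p*Uu) + 32*p/nu * Qq + 2*p*A0"
proof -
  have "p * (A1 - A0) \<le> p * (2 * ((- (nu/2)) * Dd + (- nu) * Zz + (1/nu) * Uu + (16/nu) * Pp))"
    using H p by (intro mult_left_mono) auto
  then have h1: "p*A1 - p*A0 \<le> - (p*nu*Dd) - 2*(p*nu*Zz) + 2*p/nu*Uu + 32*p/nu*Pp"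
    by (simp add: algebra_simps)
  have h2: "nu * Zz \<le> 2*(p*nu*Zz)"
  proof -
    have "1 * (nu * Zz) \<le> (2*p) * (nu * Zz)" by (rule mult_right_mono) (use p nu Z in auto)
    then show ?thesis by (simp add: algebra_simps)
  qed
  have h3: "0 \<le> p*A0" using p A0 by simp
  have h4: "32*p/nu*Pp \<le> 32*p/nu*Qq" using PQ p nu by (intro mult_left_mono) auto
  have e: "1/2 * (2*p*A1) + nu/2 * (2*p*Dd) + nu * Zz = p*A1 + p*nu*Dd + nu*Zz" by (simp add: algebra_simps)
  have e2: "1/nu * (2*p*Uu) = 2*p/nu*Uu" by simp
  show ?thesis unfolding e e2 using h1 h2 h3 h4 by linarith
qed



lemma int_lin4:
  fixes f1 f2 f3 f4 :: "real \<Rightarrow> real"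
  assumes "continuous_on {0..t} f1" "continuous_on {0..t} f2" "continuous_on {0..t} f3" "continuous_on {0..t} f4"
  shows "integral {0..t} (\<lambda>\<tau>. c1 * f1 \<tau> + c2 * f2 \<tau> + c3 * f3 \<tau> + c4 * f4 \<tau>)
    = c1 * integral {0..t} f1 + c2 * integral {0..t} f2 + c3 * integral {0..t} f3 + c4 * integral {0..t} f4"
  using assms
  by (subst integral_add, (auto intro!: integrable_continuous_interval continuous_intros)[2])+ simp

theorem lemma3p1:
  fixes R a nu :: real
  assumes "0 < R" and "0 < a" and "0 < nu"
  shows "\<exists>c>0. \<forall>t vr vr_r vz vz_z w w_r w_z w_rr w_zz w_t u u_z F.
    0 < t \<and> omega1_problem R a nu t vr vr_r vz vz_z w w_r w_z w_rr w_zz w_t u u_z F \<longrightarrow>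
      1/2 * cyl_int R a (\<lambda>r z. (w r z t)^2)
      + nu/2 * integral {0..t} (\<lambda>\<tau>. cyl_int R a (\<lambda>r z. (w_r r z \<tau>)^2 + (w_z r z \<tau>)^2))
      + nu * integral {0..t} (\<lambda>\<tau>. integral {-a..a} (\<lambda>z. (w 0 z \<tau>)^2))
    \<le> 1/nu * integral {0..t} (\<lambda>\<tau>. cyl_int R a (\<lambda>r z. (u r z \<tau>)^4))
      + c * integral {0..t} (\<lambda>\<tau>. (cyl_int R a (\<lambda>r z. \<bar>F r z \<tau>\<bar> powr (6/5))) powr (5/3))
      + cyl_int R a (\<lambda>r z. (w r z 0)^2)"
proof -
  have Rp: "R > 0" and ap: "a > 0" and nup: "nu > 0" using assms by auto
  show ?thesis
  proof (intro exI[of _ "32*pi/nu"] conjI allI impI)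
    show "32*pi/nu > 0" using nup by simp
    fix t vr vr_r vz vz_z w w_r w_z w_rr w_zz w_t u u_z F
    assume A: "0 < t \<and> omega1_problem R a nu t vr vr_r vz vz_z w w_r w_z w_rr w_zz w_t u u_z F"
    then have tp: "t > 0" by simp
    have P': "omega1_problem R a nu t vr vr_r vz vz_z w w_r w_z w_rr w_zz w_t u u_z F" using A by simp
    note P = P'[unfolded omega1_problem_def]
    note der = P[THEN conjunct1]
    note cvr = P[THEN conjunct2, THEN conjunct1]
    note cvrr = P[THEN conjunct2, THEN conjunct2, THEN conjunct1]
    note cvz = P[THEN conjunct2, THEN conjunct2, THEN conjunct2, THEN conjunct1]
    note cvzz = P[THEN conjunct2, THEN conjunct2, THEN conjunct2, THEN conjunct2, THEN conjunct1]
    note cw = P[THEN conjunct2, THEN conjunct2, THEN conjunct2, THEN conjunct2, THEN conjunct2, THEN conjunct1]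
    note cwr = P[THEN conjunct2, THEN conjunct2, THEN conjunct2, THEN conjunct2, THEN conjunct2, THEN conjunct2, THEN conjunct1]
    note cwz = P[THEN conjunct2, THEN conjunct2, THEN conjunct2, THEN conjunct2, THEN conjunct2, THEN conjunct2, THEN conjunct2, THEN conjunct1]
    note cwrr = P[THEN conjunct2, THEN conjunct2, THEN conjunct2, THEN conjunct2, THEN conjunct2, THEN conjunct2, THEN conjunct2, THEN conjunct2, THEN conjunct1]
    note cwzz = P[THEN conjunct2, THEN conjunct2, THEN conjunct2, THEN conjunct2, THEN conjunct2, THEN conjunct2, THEN conjunct2, THEN conjunct2, THEN conjunct2, THEN conjunct1]
    note cwt = P[THEN conjunct2, THEN conjunct2, THEN conjunct2, THEN conjunct2, THEN conjunct2, THEN conjunct2, THEN conjunct2, THEN conjunct2, THEN conjunct2, THEN conjunct2, THEN conjunct1]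
    note cu = P[THEN conjunct2, THEN conjunct2, THEN conjunct2, THEN conjunct2, THEN conjunct2, THEN conjunct2, THEN conjunct2, THEN conjunct2, THEN conjunct2, THEN conjunct2, THEN conjunct2, THEN conjunct1]
    note cuz = P[THEN conjunct2, THEN conjunct2, THEN conjunct2, THEN conjunct2, THEN conjunct2, THEN conjunct2, THEN conjunct2, THEN conjunct2, THEN conjunct2, THEN conjunct2, THEN conjunct2, THEN conjunct2, THEN conjunct1]
    note cF = P[THEN conjunct2, THEN conjunct2, THEN conjunct2, THEN conjunct2, THEN conjunct2, THEN conjunct2, THEN conjunct2, THEN conjunct2, THEN conjunct2, THEN conjunct2, THEN conjunct2, THEN conjunct2, THEN conjunct2, THEN conjunct1]
    note divh = P[THEN conjunct2, THEN conjunct2, THEN conjunct2, THEN conjunct2, THEN conjunct2, THEN conjunct2, THEN conjunct2, THEN conjunct2, THEN conjunct2, THEN conjunct2, THEN conjunct2, THEN conjunct2, THEN conjunct2, THEN conjunct2, THEN conjunct1]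
    note bvr = P[THEN conjunct2, THEN conjunct2, THEN conjunct2, THEN conjunct2, THEN conjunct2, THEN conjunct2, THEN conjunct2, THEN conjunct2, THEN conjunct2, THEN conjunct2, THEN conjunct2, THEN conjunct2, THEN conjunct2, THEN conjunct2, THEN conjunct2, THEN conjunct1]
    note bvz = P[THEN conjunct2, THEN conjunct2, THEN conjunct2, THEN conjunct2, THEN conjunct2, THEN conjunct2, THEN conjunct2, THEN conjunct2, THEN conjunct2, THEN conjunct2, THEN conjunct2, THEN conjunct2, THEN conjunct2, THEN conjunct2, THEN conjunct2, THEN conjunct2, THEN conjunct1]
    note eqh = P[THEN conjunct2, THEN conjunct2, THEN conjunct2, THEN conjunct2, THEN conjunct2, THEN conjunct2, THEN conjunct2, THEN conjunct2, THEN conjunct2, THEN conjunct2, THEN conjunct2, THEN conjunct2, THEN conjunct2, THEN conjunct2, THEN conjunct2, THEN conjunct2, THEN conjunct2, THEN conjunct1]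
    note bwR = P[THEN conjunct2, THEN conjunct2, THEN conjunct2, THEN conjunct2, THEN conjunct2, THEN conjunct2, THEN conjunct2, THEN conjunct2, THEN conjunct2, THEN conjunct2, THEN conjunct2, THEN conjunct2, THEN conjunct2, THEN conjunct2, THEN conjunct2, THEN conjunct2, THEN conjunct2, THEN conjunct2, THEN conjunct1]
    note bw = P[THEN conjunct2, THEN conjunct2, THEN conjunct2, THEN conjunct2, THEN conjunct2, THEN conjunct2, THEN conjunct2, THEN conjunct2, THEN conjunct2, THEN conjunct2, THEN conjunct2, THEN conjunct2, THEN conjunct2, THEN conjunct2, THEN conjunct2, THEN conjunct2, THEN conjunct2, THEN conjunct2, THEN conjunct2]
    note cvr3 = C3_of[OF cvr]
    note cvrr3 = C3_of[OF cvrr]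
    note cvz3 = C3_of[OF cvz]
    note cvzz3 = C3_of[OF cvzz]
    note cw3 = C3_of[OF cw]
    note cwr3 = C3_of[OF cwr]
    note cwz3 = C3_of[OF cwz]
    note cwrr3 = C3_of[OF cwrr]
    note cwzz3 = C3_of[OF cwzz]
    note cwt3 = C3_of[OF cwt]
    note cu3 = C3_of[OF cu]
    note cuz3 = C3_of[OF cuz]
    note cF3 = C3_of[OF cF]
    have derI: "\<And>r z \<tau>. r \<in> {0..R} \<Longrightarrow> z \<in> {-a..a} \<Longrightarrow> \<tau> \<in> {0..t} \<Longrightarrow>
        ((\<lambda>s. vr s z \<tau>) has_real_derivative vr_r r z \<tau>) (at r within {0..R}) \<and>
        ((\<lambda>s. vz r s \<tau>) has_real_derivative vz_z r z \<tau>) (at z within {-a..a}) \<and>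
        ((\<lambda>s. w s z \<tau>) has_real_derivative w_r r z \<tau>) (at r within {0..R}) \<and>
        ((\<lambda>s. w r s \<tau>) has_real_derivative w_z r z \<tau>) (at z within {-a..a}) \<and>
        ((\<lambda>s. w_r s z \<tau>) has_real_derivative w_rr r z \<tau>) (at r within {0..R}) \<and>
        ((\<lambda>s. w_z r s \<tau>) has_real_derivative w_zz r z \<tau>) (at z within {-a..a}) \<and>
        ((\<lambda>s. w r z s) has_real_derivative w_t r z \<tau>) (at \<tau> within {0..t}) \<and>
        ((\<lambda>s. u r s \<tau>) has_real_derivative u_z r z \<tau>) (at z within {-a..a})"
      using der by auto
    have divc: "vr r z \<tau> + r * vr_r r z \<tau> + r * vz_z r z \<tau> = 0"
      if "r \<in> {0..R}" "z \<in> {-a..a}" "\<tau> \<in> {0..t}" for r z \<tau>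
    proof (rule clos3[OF Rp ap tp _ _ that, where H = "\<lambda>r z \<tau>. vr r z \<tau> + r * vr_r r z \<tau> + r * vz_z r z \<tau>"])
      show "C3 R a t (\<lambda>r z \<tau>. vr r z \<tau> + r * vr_r r z \<tau> + r * vz_z r z \<tau>)"
        using cvr3 cvrr3 cvzz3 by (auto intro!: continuous_intros)
      fix r z \<tau> assume h: "0 < r" "r < R" "- a < z" "z < a" "0 < \<tau>" "\<tau> < t"
      then have "vr_r r z \<tau> + vr r z \<tau> / r + vz_z r z \<tau> = 0" using divh by auto
      then have "r * (vr_r r z \<tau> + vr r z \<tau> / r + vz_z r z \<tau>) = 0" by simp
      moreover have "r * (vr_r r z \<tau> + vr r z \<tau> / r + vz_z r z \<tau>) = vr r z \<tau> + r * vr_r r z \<tau> + r * vz_z r z \<tau>"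
        using h by (simp add: distrib_left)
      ultimately show "vr r z \<tau> + r * vr_r r z \<tau> + r * vz_z r z \<tau> = 0" by simp
    qed
    have eqc: "r * w_t r z \<tau> + r * (vr r z \<tau> * w_r r z \<tau> + vz r z \<tau> * w_z r z \<tau>)
        - nu * (r * w_rr r z \<tau> + 3 * w_r r z \<tau> + r * w_zz r z \<tau>)
        = r * (2 * u r z \<tau> * u_z r z \<tau> + F r z \<tau>)"
      if "r \<in> {0..R}" "z \<in> {-a..a}" "\<tau> \<in> {0..t}" for r z \<tau>
    proof -
      have "(\<lambda>r z \<tau>. r * w_t r z \<tau> + r * (vr r z \<tau> * w_r r z \<tau> + vz r z \<tau> * w_z r z \<tau>)
        - nu * (r * w_rr r z \<tau> + 3 * w_r r z \<tau> + r * w_zz r z \<tau>)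
        - r * (2 * u r z \<tau> * u_z r z \<tau> + F r z \<tau>)) r z \<tau> = 0"
      proof (rule clos3[OF Rp ap tp _ _ that])
        show "C3 R a t (\<lambda>r z \<tau>. r * w_t r z \<tau> + r * (vr r z \<tau> * w_r r z \<tau> + vz r z \<tau> * w_z r z \<tau>)
          - nu * (r * w_rr r z \<tau> + 3 * w_r r z \<tau> + r * w_zz r z \<tau>)
          - r * (2 * u r z \<tau> * u_z r z \<tau> + F r z \<tau>))"
          using cvr3 cvz3 cw3 cwr3 cwz3 cwrr3 cwzz3 cwt3 cu3 cuz3 cF3 by (auto intro!: continuous_intros)
        fix r z \<tau> assume h: "0 < r" "r < R" "- a < z" "z < a" "0 < \<tau>" "\<tau> < t"
        then have e: "w_t r z \<tau> + (vr r z \<tau> * w_r r z \<tau> + vz r z \<tau> * w_z r z \<tau>)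
          - nu * (w_rr r z \<tau> + w_r r z \<tau> / r + w_zz r z \<tau> + 2 / r * w_r r z \<tau>)
          - (2 * u r z \<tau> * u_z r z \<tau> + F r z \<tau>) = 0" using eqh by auto
        have "r * w_t r z \<tau> + r * (vr r z \<tau> * w_r r z \<tau> + vz r z \<tau> * w_z r z \<tau>)
          - nu * (r * w_rr r z \<tau> + 3 * w_r r z \<tau> + r * w_zz r z \<tau>)
          - r * (2 * u r z \<tau> * u_z r z \<tau> + F r z \<tau>)
          = r * (w_t r z \<tau> + (vr r z \<tau> * w_r r z \<tau> + vz r z \<tau> * w_z r z \<tau>)
          - nu * (w_rr r z \<tau> + w_r r z \<tau> / r + w_zz r z \<tau> + 2 / r * w_r r z \<tau>)
          - (2 * u r z \<tau> * u_z r z \<tau> + F r z \<tau>))"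
          using h by (simp add: field_simps)
        then show "(\<lambda>r z \<tau>. r * w_t r z \<tau> + r * (vr r z \<tau> * w_r r z \<tau> + vz r z \<tau> * w_z r z \<tau>)
          - nu * (r * w_rr r z \<tau> + 3 * w_r r z \<tau> + r * w_zz r z \<tau>)
          - r * (2 * u r z \<tau> * u_z r z \<tau> + F r z \<tau>)) r z \<tau> = 0" using e by simp
      qed
      then show ?thesis by simp
    qed
    define E where "E = (\<lambda>s. Irect R a (\<lambda>r z. (w r z s)^2 * r))"
    define J where "J = (\<lambda>\<tau>. Irect R a (\<lambda>r z. w r z \<tau> * w_t r z \<tau> * r))"
    define Dt where "Dt = (\<lambda>\<tau>. Irect R a (\<lambda>r z. ((w_r r z \<tau>)^2 + (w_z r z \<tau>)^2) * r))"
    define Zt where "Zt = (\<lambda>\<tau>. integral {-a..a} (\<lambda>z. (w 0 z \<tau>)^2))"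
    define Ut where "Ut = (\<lambda>\<tau>. Irect R a (\<lambda>r z. (u r z \<tau>)^4 * r))"
    define Ph where "Ph = (\<lambda>\<tau>. Irect R a (\<lambda>r z. \<bar>F r z \<tau>\<bar> powr (6/5) * r))"
    have pt: "J \<tau> \<le> (- (nu/2)) * Dt \<tau> + (- nu) * Zt \<tau> + (1/nu) * Ut \<tau> + (16/nu) * (Ph \<tau> powr (5/3))"
      if \<tau>: "\<tau> \<in> {0..t}" for \<tau>
    proof -
      have "J \<tau> \<le> - (nu/2) * Dt \<tau> - nu * Zt \<tau> + 1/nu * Ut \<tau> + 16/nu * Ph \<tau> powr (5/3)"
        unfolding J_def Dt_def Zt_def Ut_def Ph_def
      proof (rule ineq2d[OF Rp ap nup C3_C2[OF cvr3 \<tau>] C3_C2[OF cvrr3 \<tau>] C3_C2[OF cvz3 \<tau>] C3_C2[OF cvzz3 \<tau>]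
          C3_C2[OF cw3 \<tau>] C3_C2[OF cwr3 \<tau>] C3_C2[OF cwz3 \<tau>] C3_C2[OF cwrr3 \<tau>] C3_C2[OF cwzz3 \<tau>]
          C3_C2[OF cwt3 \<tau>] C3_C2[OF cu3 \<tau>] C3_C2[OF cuz3 \<tau>] C3_C2[OF cF3 \<tau>]])
        show "\<And>r z. r \<in> {0..R} \<Longrightarrow> z \<in> {-a..a} \<Longrightarrow> ((\<lambda>s. vr s z \<tau>) has_real_derivative vr_r r z \<tau>) (at r within {0..R})"
          using derI \<tau> by blast
        show "\<And>r z. r \<in> {0..R} \<Longrightarrow> z \<in> {-a..a} \<Longrightarrow> ((\<lambda>s. vz r s \<tau>) has_real_derivative vz_z r z \<tau>) (at z within {-a..a})"
          using derI \<tau> by blast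
        show "\<And>r z. r \<in> {0..R} \<Longrightarrow> z \<in> {-a..a} \<Longrightarrow> ((\<lambda>s. w s z \<tau>) has_real_derivative w_r r z \<tau>) (at r within {0..R})"
          using derI \<tau> by blast
        show "\<And>r z. r \<in> {0..R} \<Longrightarrow> z \<in> {-a..a} \<Longrightarrow> ((\<lambda>s. w r s \<tau>) has_real_derivative w_z r z \<tau>) (at z within {-a..a})"
          using derI \<tau> by blast
        show "\<And>r z. r \<in> {0..R} \<Longrightarrow> z \<in> {-a..a} \<Longrightarrow> ((\<lambda>s. w_r s z \<tau>) has_real_derivative w_rr r z \<tau>) (at r within {0..R})"
          using derI \<tau> by blast
        show "\<And>r z. r \<in> {0..R} \<Longrightarrow> z \<in> {-a..a} \<Longrightarrow> ((\<lambda>s. w_z r s \<tau>) has_real_derivative w_zz r z \<tau>) (at z within {-a..a})"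
          using derI \<tau> by blast
        show "\<And>r z. r \<in> {0..R} \<Longrightarrow> z \<in> {-a..a} \<Longrightarrow> ((\<lambda>s. u r s \<tau>) has_real_derivative u_z r z \<tau>) (at z within {-a..a})"
          using derI \<tau> by blast
        show "\<And>z. z \<in> {-a..a} \<Longrightarrow> vr R z \<tau> = 0" using bvr \<tau> by auto
        show "\<And>z. z \<in> {-a..a} \<Longrightarrow> w R z \<tau> = 0" using bwR \<tau> by auto
        show "\<And>r. r \<in> {0..R} \<Longrightarrow> w r a \<tau> = 0 \<and> w r (-a) \<tau> = 0" using bw \<tau> by auto
        show "\<And>r z. r \<in> {0..R} \<Longrightarrow> z \<in> {-a..a} \<Longrightarrow> vr r z \<tau> + r * vr_r r z \<tau> + r * vz_z r z \<tau> = 0"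
          using divc \<tau> by blast
        show "\<And>r z. r \<in> {0..R} \<Longrightarrow> z \<in> {-a..a} \<Longrightarrow> r * w_t r z \<tau> + r * (vr r z \<tau> * w_r r z \<tau> + vz r z \<tau> * w_z r z \<tau>)
            - nu * (r * w_rr r z \<tau> + 3 * w_r r z \<tau> + r * w_zz r z \<tau>) = r * (2 * u r z \<tau> * u_z r z \<tau> + F r z \<tau>)"
          using eqc \<tau> by blast
      qed
      then show ?thesis by simp
    qed
    have dE: "(E has_real_derivative 2 * J \<tau>) (at \<tau> within {0..t})" if \<tau>: "\<tau> \<in> {0..t}" for \<tau>
    proof -
      have L: "((\<lambda>s. integral (cbox (0, -a) (R, a)) (\<lambda>p. (w (fst p) (snd p) s)^2 * fst p)) has_field_derivative
          integral (cbox (0, -a) (R, a)) (\<lambda>p. 2 * (w (fst p) (snd p) \<tau> * w_t (fst p) (snd p) \<tau> * fst p))) (at \<tau> within {0..t})"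
      proof (rule leibniz_rule_field_derivative[where f = "\<lambda>s p. (w (fst p) (snd p) s)^2 * fst p"
            and fx = "\<lambda>s p. 2 * (w (fst p) (snd p) s * w_t (fst p) (snd p) s * fst p)"])
        fix s p assume s: "s \<in> {0..t}" and p: "p \<in> cbox (0, -a) (R, a)"
        have r: "fst p \<in> {0..R}" "snd p \<in> {-a..a}" using p by (cases p, auto)+
        have d: "((\<lambda>s. w (fst p) (snd p) s) has_real_derivative w_t (fst p) (snd p) s) (at s within {0..t})"
          using derI[OF r s] by blast
        show "((\<lambda>s. (w (fst p) (snd p) s)^2 * fst p) has_field_derivative 2 * (w (fst p) (snd p) s * w_t (fst p) (snd p) s * fst p)) (at s within {0..t})"
          by (auto intro!: derivative_eq_intros d simp: algebra_simps)
      next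
        fix s assume s: "s \<in> {0..t}"
        have "C2 R a (\<lambda>r z. (w r z s)^2 * r)" using C3_C2[OF cw3 s] by (auto intro!: continuous_intros)
        from C2_integrable[OF this] show "(\<lambda>p. (w (fst p) (snd p) s)^2 * fst p) integrable_on cbox (0, -a) (R, a)"
          unfolding rect_cbox .
      next
        show "continuous_on ({0..t} \<times> cbox (0, -a) (R, a)) (\<lambda>(s, p). 2 * (w (fst p) (snd p) s * w_t (fst p) (snd p) s * fst p))"
          using C3_param[OF cw3] C3_param[OF cwt3] unfolding rect_cbox
          by (auto simp: split_beta' intro!: continuous_intros)
      qed (use \<tau> in auto)
      have "E = (\<lambda>s. integral (cbox (0, -a) (R, a)) (\<lambda>p. (w (fst p) (snd p) s)^2 * fst p))"
        unfolding E_def Irect_def rect_cbox ..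
      moreover have "2 * J \<tau> = integral (cbox (0, -a) (R, a)) (\<lambda>p. 2 * (w (fst p) (snd p) \<tau> * w_t (fst p) (snd p) \<tau> * fst p))"
        unfolding J_def Irect_def rect_cbox by simp
      ultimately show ?thesis using L by simp
    qed
    have ftc: "integral {0..t} (\<lambda>\<tau>. 2 * J \<tau>) = E t - E 0"
      by (rule ftc_real(1)) (use tp dE in auto)
    have cJ: "continuous_on {0..t} J" unfolding J_def
      by (rule Irect_cont_time) (use C3_param[OF cw3] C3_param[OF cwt3] in \<open>auto intro!: continuous_intros\<close>)
    have cD: "continuous_on {0..t} Dt" unfolding Dt_def
      by (rule Irect_cont_time) (use C3_param[OF cwr3] C3_param[OF cwz3] in \<open>auto intro!: continuous_intros\<close>)
    have cU: "continuous_on {0..t} Ut" unfolding Ut_def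
      by (rule Irect_cont_time) (use C3_param[OF cu3] in \<open>auto intro!: continuous_intros\<close>)
    have cPh: "continuous_on {0..t} Ph" unfolding Ph_def
      by (rule Irect_cont_time) (use C3_param[OF cF3] in \<open>auto intro!: continuous_intros continuous_on_powr'\<close>)
    have cZ: "continuous_on {0..t} Zt"
    proof -
      have "continuous_on ({0..t} \<times> cbox (-a) a) (\<lambda>(s, z). (w 0 z s)^2)"
        using C3_axis[OF cw3 Rp] by (auto simp: split_beta' intro!: continuous_intros)
      from integral_continuous_on_param[OF this] show ?thesis unfolding Zt_def by simp
    qed
    have Ph0: "0 \<le> Ph \<tau>" if \<tau>: "\<tau> \<in> {0..t}" for \<tau>
      unfolding Ph_def by (rule Irect_nonneg[OF C2_powr[OF C3_C2[OF cF3 \<tau>]]]) auto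
    have cP53: "continuous_on {0..t} (\<lambda>\<tau>. Ph \<tau> powr (5/3))"
      by (rule continuous_on_powr'[OF cPh continuous_on_const]) (use Ph0 in auto)
    have cQ: "continuous_on {0..t} (\<lambda>\<tau>. (2 * pi * Ph \<tau>) powr (5/3))"
      by (rule continuous_on_powr') (use Ph0 in \<open>auto intro!: continuous_intros cPh\<close>)
    have IJ: "integral {0..t} J \<le> integral {0..t} (\<lambda>\<tau>. (- (nu/2)) * Dt \<tau> + (- nu) * Zt \<tau> + (1/nu) * Ut \<tau> + (16/nu) * (Ph \<tau> powr (5/3)))"
      by (rule integral_le) (use pt nup in \<open>auto intro!: integrable_continuous_interval continuous_intros cJ cD cZ cU cP53\<close>)
    also have "\<dots> = (- (nu/2)) * integral {0..t} Dt + (- nu) * integral {0..t} Zt + (1/nu) * integral {0..t} Ut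
        + (16/nu) * integral {0..t} (\<lambda>\<tau>. Ph \<tau> powr (5/3))"
      by (rule int_lin4[OF cD cZ cU cP53])
    finally have IJ2: "integral {0..t} J \<le> \<dots>" .
    have Hineq: "E t - E 0 \<le> 2 * ((- (nu/2)) * integral {0..t} Dt + (- nu) * integral {0..t} Zt + (1/nu) * integral {0..t} Ut
        + (16/nu) * integral {0..t} (\<lambda>\<tau>. Ph \<tau> powr (5/3)))"
      using IJ2 ftc by simp
    have Z0: "0 \<le> integral {0..t} Zt"
    proof (rule integral_nonneg)
      show "Zt integrable_on {0..t}" by (rule integrable_continuous_interval[OF cZ])
      fix \<tau> assume \<tau>: "\<tau> \<in> {0..t}"
      have "continuous_on {-a..a} (\<lambda>z. w 0 z \<tau>)" by (rule C2_slice_z[OF C3_C2[OF cw3 \<tau>]]) (use Rp in auto)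
      then show "0 \<le> Zt \<tau>" unfolding Zt_def
        by (intro integral_nonneg) (auto intro!: integrable_continuous_interval continuous_intros)
    qed
    have A0: "0 \<le> E 0" unfolding E_def
      by (rule Irect_nonneg) (use C3_C2[OF cw3, of 0] tp in \<open>auto intro!: continuous_intros\<close>)
    have PQ: "integral {0..t} (\<lambda>\<tau>. Ph \<tau> powr (5/3)) \<le> integral {0..t} (\<lambda>\<tau>. (2 * pi * Ph \<tau>) powr (5/3))"
    proof (rule integral_le)
      show "(\<lambda>\<tau>. Ph \<tau> powr (5/3)) integrable_on {0..t}" by (rule integrable_continuous_interval[OF cP53])
      show "(\<lambda>\<tau>. (2 * pi * Ph \<tau>) powr (5/3)) integrable_on {0..t}" by (rule integrable_continuous_interval[OF cQ])
      fix \<tau> assume \<tau>: "\<tau> \<in> {0..t}"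
      have "Ph \<tau> \<le> 2 * pi * Ph \<tau>" using Ph0[OF \<tau>] pi_gt3 by (simp add: mult_le_cancel_right1 )
      then show "Ph \<tau> powr (5/3) \<le> (2 * pi * Ph \<tau>) powr (5/3)" using Ph0[OF \<tau>] by (intro powr_mono2) auto
    qed
    have pi1: "pi > 1" using pi_gt3 by simp
    have fin: "1/2 * (2*pi*E t) + nu/2 * (2*pi*integral {0..t} Dt) + nu * integral {0..t} Zt
       \<le> 1/nu * (2*pi*integral {0..t} Ut) + 32*pi/nu * integral {0..t} (\<lambda>\<tau>. (2 * pi * Ph \<tau>) powr (5/3)) + 2*pi*E 0"
      by (rule final_arith[OF nup pi1 Z0 A0 PQ Hineq])
    have e1: "cyl_int R a (\<lambda>r z. (w r z t)^2) = 2*pi*E t" by (simp add: cyl_int_Irect E_def)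
    have e5: "cyl_int R a (\<lambda>r z. (w r z 0)^2) = 2*pi*E 0" by (simp add: cyl_int_Irect E_def)
    have e2: "integral {0..t} (\<lambda>\<tau>. cyl_int R a (\<lambda>r z. (w_r r z \<tau>)^2 + (w_z r z \<tau>)^2)) = 2*pi*integral {0..t} Dt"
      by (simp add: cyl_int_Irect Dt_def)
    have e3: "integral {0..t} (\<lambda>\<tau>. cyl_int R a (\<lambda>r z. (u r z \<tau>)^4)) = 2*pi*integral {0..t} Ut"
      by (simp add: cyl_int_Irect Ut_def)
    have e4: "integral {0..t} (\<lambda>\<tau>. (cyl_int R a (\<lambda>r z. \<bar>F r z \<tau>\<bar> powr (6/5))) powr (5/3))
        = integral {0..t} (\<lambda>\<tau>. (2 * pi * Ph \<tau>) powr (5/3))"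
      by (simp add: cyl_int_Irect Ph_def)
    show "1/2 * cyl_int R a (\<lambda>r z. (w r z t)^2)
      + nu/2 * integral {0..t} (\<lambda>\<tau>. cyl_int R a (\<lambda>r z. (w_r r z \<tau>)^2 + (w_z r z \<tau>)^2))
      + nu * integral {0..t} (\<lambda>\<tau>. integral {-a..a} (\<lambda>z. (w 0 z \<tau>)^2))
    \<le> 1/nu * integral {0..t} (\<lambda>\<tau>. cyl_int R a (\<lambda>r z. (u r z \<tau>)^4))
      + 32*pi/nu * integral {0..t} (\<lambda>\<tau>. (cyl_int R a (\<lambda>r z. \<bar>F r z \<tau>\<bar> powr (6/5))) powr (5/3))
      + cyl_int R a (\<lambda>r z. (w r z 0)^2)"
      unfolding e1 e2 e3 e4 e5 using fin unfolding Zt_def .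
  qed
qed

end
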